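(* Every loopless $3$-irregular subcubic multigraph has a $(1^2,2^2)$-packing edge-coloring.
   Context: A multigraph may have parallel edges; the degree of a vertex counts edges with multiplicity. A multigraph is subcubic if every vertex has degree at most $3$. A multigraph is $3$-irregular if no two adjacent vertices both have degree $3$. The distance between two edges is the distance between the corresponding vertices in the line graph (so two edges sharing an endpoint, including parallel edges, are at distance $1$). A $(1^2,2^2)$-packing edge-coloring of $G$ is a partition of $E(G)$ into four sets $E_1,E_2,E_3,E_4$ such that any two distinct edges in $E_1$, or any two in $E_2$, are at distance at least $2$ (i.e. $E_1,E_2$ are matchings), and any two distinct edges in $E_3$, or any two in $E_4$, are at distance at least $3$ (i.e. $E_3,E_4$ are induced matchings). *)

theory Defs
  imports Main
begin

text \<open>A finite multigraph: vertex set V, edge set E of edge identifiers, and an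
  incidence map ends assigning to each edge its set of endpoints (one endpoint
  for a loop, two for an ordinary edge). Parallel edges are distinct identifiers
  with the same endpoints.\<close>

definition multigraph :: "'v set \<Rightarrow> 'e set \<Rightarrow> ('e \<Rightarrow> 'v set) \<Rightarrow> bool" where
  "multigraph V E ends \<longleftrightarrow> finite V \<and> finite E \<and>
     (\<forall>e\<in>E. ends e \<subseteq> V \<and> (card (ends e) = 1 \<or> card (ends e) = 2))"

definition loopless :: "'e set \<Rightarrow> ('e \<Rightarrow> 'v set) \<Rightarrow> bool" where
  "loopless E ends \<longleftrightarrow> (\<forall>e\<in>E. card (ends e) = 2)"

definition degree :: "'e set \<Rightarrow> ('e \<Rightarrow> 'v set) \<Rightarrow> 'v \<Rightarrow> nat" where
  "degree E ends v = (\<Sum>e\<in>{e\<in>E. v \<in> ends e}. if card (ends e) = 1 then 2 else 1)"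

definition subcubic :: "'v set \<Rightarrow> 'e set \<Rightarrow> ('e \<Rightarrow> 'v set) \<Rightarrow> bool" where
  "subcubic V E ends \<longleftrightarrow> (\<forall>v\<in>V. degree E ends v \<le> 3)"

definition adjacent :: "'e set \<Rightarrow> ('e \<Rightarrow> 'v set) \<Rightarrow> 'v \<Rightarrow> 'v \<Rightarrow> bool" where
  "adjacent E ends u v \<longleftrightarrow> u \<noteq> v \<and> (\<exists>e\<in>E. ends e = {u, v})"

definition irregular3 :: "'v set \<Rightarrow> 'e set \<Rightarrow> ('e \<Rightarrow> 'v set) \<Rightarrow> bool" where
  "irregular3 V E ends \<longleftrightarrow>
     (\<forall>u\<in>V. \<forall>v\<in>V. adjacent E ends u v \<longrightarrow> \<not> (degree E ends u = 3 \<and> degree E ends v = 3))"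

definition ladj :: "('e \<Rightarrow> 'v set) \<Rightarrow> 'e \<Rightarrow> 'e \<Rightarrow> bool" where
  "ladj ends e f \<longleftrightarrow> e \<noteq> f \<and> ends e \<inter> ends f \<noteq> {}"

definition dist_ge2 :: "'e set \<Rightarrow> ('e \<Rightarrow> 'v set) \<Rightarrow> 'e \<Rightarrow> 'e \<Rightarrow> bool" where
  "dist_ge2 E ends e f \<longleftrightarrow> \<not> ladj ends e f"

definition dist_ge3 :: "'e set \<Rightarrow> ('e \<Rightarrow> 'v set) \<Rightarrow> 'e \<Rightarrow> 'e \<Rightarrow> bool" where
  "dist_ge3 E ends e f \<longleftrightarrow> \<not> ladj ends e f \<and> \<not> (\<exists>g\<in>E. ladj ends e g \<and> ladj ends g f)"

definition packing_1122 :: "'e set \<Rightarrow> ('e \<Rightarrow> 'v set) \<Rightarrow> 'e set \<Rightarrow> 'e set \<Rightarrow> 'e set \<Rightarrow> 'e set \<Rightarrow> bool" where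
  "packing_1122 E ends E1 E2 E3 E4 \<longleftrightarrow>
     E1 \<union> E2 \<union> E3 \<union> E4 = E \<and>
     E1 \<inter> E2 = {} \<and> E1 \<inter> E3 = {} \<and> E1 \<inter> E4 = {} \<and>
     E2 \<inter> E3 = {} \<and> E2 \<inter> E4 = {} \<and> E3 \<inter> E4 = {} \<and>
     (\<forall>e\<in>E1. \<forall>f\<in>E1. e \<noteq> f \<longrightarrow> dist_ge2 E ends e f) \<and>
     (\<forall>e\<in>E2. \<forall>f\<in>E2. e \<noteq> f \<longrightarrow> dist_ge2 E ends e f) \<and>
     (\<forall>e\<in>E3. \<forall>f\<in>E3. e \<noteq> f \<longrightarrow> dist_ge3 E ends e f) \<and>
     (\<forall>e\<in>E4. \<forall>f\<in>E4. e \<noteq> f \<longrightarrow> dist_ge3 E ends e f)"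

end

theory Submission
  imports Defs
begin

definition inc :: "'e set \<Rightarrow> ('e \<Rightarrow> 'v set) \<Rightarrow> 'v \<Rightarrow> 'e set" where
  "inc E ends v = {e\<in>E. v \<in> ends e}"

definition del :: "'e set \<Rightarrow> ('e \<Rightarrow> 'v set) \<Rightarrow> 'v set \<Rightarrow> 'e set" where
  "del E ends S = {e\<in>E. ends e \<inter> S = {}}"

definition wf :: "'e set \<Rightarrow> ('e \<Rightarrow> 'v set) \<Rightarrow> bool" where
  "wf E ends \<longleftrightarrow> finite E \<and> (\<forall>e\<in>E. card (ends e) = 2) \<and> (\<forall>v. card (inc E ends v) \<le> 3)
     \<and> (\<forall>e\<in>E. \<exists>x\<in>ends e. card (inc E ends x) \<le> 2)"

definition dcnt :: "'e set \<Rightarrow> ('e \<Rightarrow> 'v set) \<Rightarrow> 'v set \<Rightarrow> 'v \<Rightarrow> nat" where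
  "dcnt E ends D v = card {e\<in>inc E ends v. ends e \<inter> D \<noteq> {}}"

definition dhyp :: "'e set \<Rightarrow> ('e \<Rightarrow> 'v set) \<Rightarrow> 'v set \<Rightarrow> bool" where
  "dhyp E ends D \<longleftrightarrow> (\<forall>p\<in>D. card (inc E ends p) \<le> 1) \<and>
     (\<forall>v. card (inc E ends v) = 3 \<longrightarrow> dcnt E ends D v \<le> 2)"

definition proper :: "'e set \<Rightarrow> ('e \<Rightarrow> 'v set) \<Rightarrow> ('e \<Rightarrow> nat) \<Rightarrow> bool" where
  "proper E ends col \<longleftrightarrow> (\<forall>e\<in>E. col e \<in> {1,2,3,4}) \<and>
     (\<forall>e\<in>E. \<forall>f\<in>E. ladj ends e f \<longrightarrow> col e \<noteq> col f) \<and>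
     (\<forall>e\<in>E. \<forall>f\<in>E. \<forall>g\<in>E. e \<noteq> f \<longrightarrow> col e = col f \<longrightarrow> 3 \<le> col e \<longrightarrow>
         ladj ends e g \<longrightarrow> ladj ends g f \<longrightarrow> False)"

definition good :: "'e set \<Rightarrow> ('e \<Rightarrow> 'v set) \<Rightarrow> 'v set \<Rightarrow> ('e \<Rightarrow> nat) \<Rightarrow> bool" where
  "good E ends D col \<longleftrightarrow> proper E ends col \<and>
     (\<forall>v. card (inc E ends v) = 3 \<longrightarrow> 1 \<in> col ` inc E ends v \<and> 2 \<in> col ` inc E ends v) \<and>
     (\<forall>e\<in>E. ends e \<inter> D \<noteq> {} \<longrightarrow> col e \<le> 2)"

lemma ladj_sym: "ladj ends e f \<longleftrightarrow> ladj ends f e"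
  unfolding ladj_def by auto

lemma ladjI: "e \<noteq> f \<Longrightarrow> v \<in> ends e \<Longrightarrow> v \<in> ends f \<Longrightarrow> ladj ends e f"
  unfolding ladj_def by auto

lemma ladjE: "ladj ends e f \<Longrightarrow> (\<And>v. e \<noteq> f \<Longrightarrow> v \<in> ends e \<Longrightarrow> v \<in> ends f \<Longrightarrow> P) \<Longrightarrow> P"
  unfolding ladj_def by auto

lemma inc_iff[simp]: "e \<in> inc E ends v \<longleftrightarrow> e \<in> E \<and> v \<in> ends e"
  unfolding inc_def by auto

lemma del_iff[simp]: "e \<in> del E ends S \<longleftrightarrow> e \<in> E \<and> ends e \<inter> S = {}"
  unfolding del_def by auto

lemma inc_sub: "inc E ends v \<subseteq> E" by auto

lemma del_sub: "del E ends S \<subseteq> E" by auto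

lemma inc_del: "inc (del E ends S) ends v = {e\<in>inc E ends v. ends e \<inter> S = {}}"
  by auto

lemma inc_del_sub: "inc (del E ends S) ends v \<subseteq> inc E ends v" by auto

lemma wfD:
  assumes "wf E ends"
  shows "finite E" "\<And>e. e \<in> E \<Longrightarrow> card (ends e) = 2" "\<And>v. card (inc E ends v) \<le> 3"
    "\<And>e. e \<in> E \<Longrightarrow> \<exists>x\<in>ends e. card (inc E ends x) \<le> 2"
  using assms unfolding wf_def by auto

lemma finite_inc: "finite E \<Longrightarrow> finite (inc E ends v)"
  by (rule finite_subset[OF inc_sub])

lemma card_inc_del_le: "finite E \<Longrightarrow> card (inc (del E ends S) ends v) \<le> card (inc E ends v)"
  by (intro card_mono finite_inc inc_del_sub)

lemma wf_del: assumes "wf E ends" shows "wf (del E ends S) ends"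
proof -
  have fin: "finite E" using wfD(1)[OF assms] .
  show ?thesis unfolding wf_def
  proof (intro conjI ballI allI)
    show "finite (del E ends S)" using fin by (rule finite_subset[OF del_sub])
  next
    fix e assume "e \<in> del E ends S" then show "card (ends e) = 2" using wfD(2)[OF assms] by auto
  next
    fix v show "card (inc (del E ends S) ends v) \<le> 3"
      using card_inc_del_le[OF fin, of ends S v] wfD(3)[OF assms, of v] by linarith
  next
    fix e assume "e \<in> del E ends S"
    then obtain x where "x \<in> ends e" "card (inc E ends x) \<le> 2" using wfD(4)[OF assms] by auto
    then show "\<exists>x\<in>ends e. card (inc (del E ends S) ends x) \<le> 2"
      using card_inc_del_le[OF fin, of ends S x] by (intro bexI[of _ x]) auto
  qed
qed

lemma ends2:
  assumes "card A = 2" "v \<in> A"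
  obtains w where "A = {v, w}" "w \<noteq> v"
proof -
  obtain x y where xy: "A = {x,y}" "x \<noteq> y" using assms(1) card_2_iff by metis
  show ?thesis
  proof (cases "v = x")
    case True then show ?thesis using that xy by auto
  next
    case False then have "v = y" using assms(2) xy by auto
    then show ?thesis using that[of x] xy by auto
  qed
qed

lemma high_high:
  assumes "wf E ends" "e \<in> E" "u \<in> ends e" "v \<in> ends e" "u \<noteq> v"
    "card (inc E ends u) = 3" "card (inc E ends v) = 3"
  shows False
proof -
  have "ends e = {u, v}"
  proof -
    obtain w where "ends e = {u,w}" "w \<noteq> u" using ends2[OF wfD(2)[OF assms(1,2)] assms(3)] by auto
    then show ?thesis using assms(4,5) by auto
  qed
  then show False using wfD(4)[OF assms(1,2)] assms(6,7) by auto
qed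

lemma proper_cong: "(\<And>e. e \<in> E \<Longrightarrow> c e = c' e) \<Longrightarrow> proper E ends c \<longleftrightarrow> proper E ends c'"
  unfolding proper_def by simp

lemma good_cong:
  assumes "\<And>e. e \<in> E \<Longrightarrow> c e = c' e"
  shows "good E ends D c \<longleftrightarrow> good E ends D c'"
proof -
  have im: "c ` inc E ends v = c' ` inc E ends v" for v using assms by (auto intro!: image_cong)
  show ?thesis unfolding good_def using proper_cong[where E=E and c=c and c'=c'] im assms by auto
qed

lemma L_free:
  fixes c :: "'e \<Rightarrow> nat"
  assumes "finite X" "card X \<le> 3" "card X = 3 \<longrightarrow> 1 \<in> c ` X \<and> 2 \<in> c ` X"
    "e0 \<in> X" "c e0 \<in> {1,2}"
  shows "\<exists>d\<in>{3,4}. d \<notin> c ` X"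
proof (rule ccontr)
  assume "\<not> ?thesis"
  then have h3: "3 \<in> c ` X" and h4: "4 \<in> c ` X" by auto
  obtain e3 where e3: "e3 \<in> X" "c e3 = 3" using h3 by (metis imageE)
  obtain e4 where e4: "e4 \<in> X" "c e4 = 4" using h4 by (metis imageE)
  note e = e3(1) e4(1) e3(2) e4(2)
  show False
  proof (cases "card X = 3")
    case True
    then have h1: "1 \<in> c ` X" and h2: "2 \<in> c ` X" using assms(3) by auto
    obtain e1 where "e1 \<in> X" "c e1 = 1" using h1 by (metis imageE)
    moreover obtain e2 where "e2 \<in> X" "c e2 = 2" using h2 by (metis imageE)
    ultimately have "{e1,e2,e3,e4} \<subseteq> X" "e1 \<noteq> e2" "e1 \<noteq> e3" "e1 \<noteq> e4" "e2 \<noteq> e3" "e2 \<noteq> e4" "e3 \<noteq> e4"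
      using e by auto
    then have s4: "{e1,e2,e3,e4} \<subseteq> X" "card {e1,e2,e3,e4} = 4" by auto
    have "card {e1,e2,e3,e4} \<le> card X" by (rule card_mono[OF assms(1) s4(1)])
    then show False using s4(2) True by linarith
  next
    case False
    then have "card X \<le> 2" using assms(2) by auto
    have "{e0,e3,e4} \<subseteq> X" "e0 \<noteq> e3" "e0 \<noteq> e4" "e3 \<noteq> e4" using e assms(4,5) by auto
    then have s3: "{e0,e3,e4} \<subseteq> X" "card {e0,e3,e4} = 3" by auto
    have "card {e0,e3,e4} \<le> card X" by (rule card_mono[OF assms(1) s3(1)])
    then show False using s3(2) \<open>card X \<le> 2\<close> by linarith
  qed
qed

lemma properD:
  assumes "proper E ends col"
  shows properD1: "e \<in> E \<Longrightarrow> col e \<in> {1,2,3,4}"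
    and properD2: "e \<in> E \<Longrightarrow> f \<in> E \<Longrightarrow> ladj ends e f \<Longrightarrow> col e \<noteq> col f"
    and properD3: "e \<in> E \<Longrightarrow> f \<in> E \<Longrightarrow> g \<in> E \<Longrightarrow> e \<noteq> f \<Longrightarrow> col e = col f \<Longrightarrow> 3 \<le> col e
       \<Longrightarrow> ladj ends e g \<Longrightarrow> ladj ends g f \<Longrightarrow> False"
  using assms unfolding proper_def by blast+

lemma goodD:
  assumes "good E ends D col"
  shows goodD1: "proper E ends col"
    and goodD2: "card (inc E ends v) = 3 \<Longrightarrow> 1 \<in> col ` inc E ends v"
    and goodD3: "card (inc E ends v) = 3 \<Longrightarrow> 2 \<in> col ` inc E ends v"
    and goodD4: "e \<in> E \<Longrightarrow> ends e \<inter> D \<noteq> {} \<Longrightarrow> col e \<le> 2"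
  using assms unfolding good_def by blast+

lemma proper_ext:
  assumes two: "\<forall>e\<in>E. card (ends e) = 2"
    and old: "proper (del E ends S) ends col"
    and rng: "\<forall>e\<in>E - del E ends S. col e \<in> {1,2,3,4}"
    and adj: "\<forall>e\<in>E - del E ends S. \<forall>f\<in>E. ladj ends e f \<longrightarrow> col e \<noteq> col f"
    and dst: "\<forall>e\<in>E - del E ends S. \<forall>f\<in>E. \<forall>g\<in>E. e \<noteq> f \<longrightarrow> col e = col f \<longrightarrow> 3 \<le> col e
                \<longrightarrow> ladj ends e g \<longrightarrow> ladj ends g f \<longrightarrow> False"
  shows "proper E ends col"
  unfolding proper_def
proof (intro conjI ballI impI)
  fix e assume "e \<in> E"
  then show "col e \<in> {1,2,3,4}" using properD1[OF old] rng by (cases "e \<in> del E ends S") auto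
next
  fix e f assume ef: "e \<in> E" "f \<in> E" "ladj ends e f"
  show "col e \<noteq> col f"
  proof (cases "e \<in> del E ends S")
    case True
    show ?thesis
    proof (cases "f \<in> del E ends S")
      case True
      then show ?thesis using properD2[OF old \<open>e \<in> del E ends S\<close> _ ef(3)] by blast
    next
      case False
      have fe: "ladj ends f e" using ef(3) by (simp add: ladj_sym)
      have "f \<in> E - del E ends S" using False ef(2) by simp
      then have "col f \<noteq> col e" using adj ef(1) fe by blast
      then show ?thesis by simp
    qed
  next
    case False
    then show ?thesis using adj ef by blast
  qed
next
  fix e f g assume efg: "e \<in> E" "f \<in> E" "g \<in> E" "e \<noteq> f" "col e = col f" "3 \<le> col e"
    "ladj ends e g" "ladj ends g f"
  show False
  proof (cases "e \<in> del E ends S")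
    case False then have "e \<in> E - del E ends S" using efg(1) by simp
    then show False by (rule dst[rule_format, OF _ efg(2) efg(3)]) (use efg in auto)
  next
    case eT: True
    show False
    proof (cases "f \<in> del E ends S")
      case False
      have l: "ladj ends f g" "ladj ends g e" using efg(7,8) by (simp_all add: ladj_sym)
      have "f \<in> E - del E ends S" using False efg(2) by simp
      then show False by (rule dst[rule_format, OF _ efg(1) efg(3)]) (use efg l in auto)
    next
      case fT: True
      show False
      proof (cases "g \<in> del E ends S")
        case True show False by (rule properD3[OF old eT fT True efg(4,5,6,7,8)])
      next
        case False
        then obtain s where s: "s \<in> ends g" "s \<in> S" using efg(3) by auto
        obtain x where x: "ends g = {s, x}" "x \<noteq> s" using ends2[OF bspec[OF two efg(3)] s(1)] by blast
        obtain v where v: "v \<in> ends e" "v \<in> ends g" using efg(7) by (auto elim: ladjE)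
        obtain v' where v': "v' \<in> ends g" "v' \<in> ends f" using efg(8) by (auto elim: ladjE)
        have "v \<notin> S" "v' \<notin> S" using v(1) v'(2) eT fT by auto
        then have "v = x" "v' = x" using v(2) v'(1) x s(2) by auto
        then have "ladj ends e f" using v v' efg(4) by (auto intro: ladjI)
        then show False using properD2[OF old eT fT] efg(5) by blast
      qed
    qed
  qed
qed

lemma good_ext:
  assumes fin: "finite E"
    and og: "good (del E ends S) ends D' col"
    and pr: "proper E ends col"
    and i1: "\<forall>v. card (inc E ends v) = 3 \<longrightarrow> \<not> inc E ends v \<subseteq> del E ends S \<longrightarrow>
               1 \<in> col ` inc E ends v \<and> 2 \<in> col ` inc E ends v"
    and dn: "\<forall>e\<in>E - del E ends S. ends e \<inter> D \<noteq> {} \<longrightarrow> col e \<le> 2"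
    and ds: "D - S \<subseteq> D'"
  shows "good E ends D col"
  unfolding good_def
proof (intro conjI)
  show "proper E ends col" by fact
next
  show "\<forall>v. card (inc E ends v) = 3 \<longrightarrow> 1 \<in> col ` inc E ends v \<and> 2 \<in> col ` inc E ends v"
  proof (intro allI impI)
  fix v assume v: "card (inc E ends v) = 3"
  show "1 \<in> col ` inc E ends v \<and> 2 \<in> col ` inc E ends v"
  proof (cases "inc E ends v \<subseteq> del E ends S")
    case True
    then have "inc (del E ends S) ends v = inc E ends v" by auto
    then show ?thesis using goodD2[OF og] goodD3[OF og] v by metis
  next
    case False then show ?thesis using i1 v by blast
  qed
  qed
next
  show "\<forall>e\<in>E. ends e \<inter> D \<noteq> {} \<longrightarrow> col e \<le> 2"
  proof (intro ballI impI)
  fix e assume e: "e \<in> E" "ends e \<inter> D \<noteq> {}"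
  show "col e \<le> 2"
  proof (cases "e \<in> del E ends S")
    case True
    then have "ends e \<inter> D' \<noteq> {}" using e(2) ds by auto
    then show ?thesis using goodD4[OF og] True by blast
  next
    case False then show ?thesis using dn e by blast
  qed
  qed
qed

subsection \<open>Kempe chains\<close>

definition krel :: "'e set \<Rightarrow> ('e \<Rightarrow> 'v set) \<Rightarrow> ('e \<Rightarrow> nat) \<Rightarrow> ('e \<times> 'e) set" where
  "krel E ends col = {(e,f). e \<in> E \<and> f \<in> E \<and> col e \<in> {1,2} \<and> col f \<in> {1,2} \<and> ladj ends e f}"

definition kcomp :: "'e set \<Rightarrow> ('e \<Rightarrow> 'v set) \<Rightarrow> ('e \<Rightarrow> nat) \<Rightarrow> 'e \<Rightarrow> 'e set" where
  "kcomp E ends col g = {f. (g, f) \<in> (krel E ends col)\<^sup>*}"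

definition kswap :: "'e set \<Rightarrow> ('e \<Rightarrow> 'v set) \<Rightarrow> ('e \<Rightarrow> nat) \<Rightarrow> 'e \<Rightarrow> 'e \<Rightarrow> nat" where
  "kswap E ends col g = (\<lambda>e. if e \<in> kcomp E ends col g then 3 - col e else col e)"

lemma kcomp_self: "g \<in> kcomp E ends col g"
  unfolding kcomp_def by auto

lemma kcomp_mem:
  assumes "g \<in> E" "col g \<in> {1,2}" "f \<in> kcomp E ends col g"
  shows "f \<in> E \<and> col f \<in> {1,2}"
proof -
  have "(g, f) \<in> (krel E ends col)\<^sup>*" using assms(3) unfolding kcomp_def by auto
  then show ?thesis
  proof (cases rule: rtrancl.cases)
    case rtrancl_refl then show ?thesis using assms by auto
  next
    case (rtrancl_into_rtrancl b) then show ?thesis unfolding krel_def by auto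
  qed
qed

lemma kcomp_closed:
  assumes "e \<in> kcomp E ends col g" "e \<in> E" "col e \<in> {1,2}" "f \<in> E" "col f \<in> {1,2}" "ladj ends e f"
  shows "f \<in> kcomp E ends col g"
proof -
  have "(e, f) \<in> krel E ends col" using assms(2-6) unfolding krel_def by auto
  then show ?thesis using assms(1) unfolding kcomp_def by (auto intro: rtrancl_into_rtrancl)
qed

lemma kswap_good:
  assumes gd: "good E ends D col" and g: "g \<in> E" "col g \<in> {1,2}"
  shows "good E ends D (kswap E ends col g)"
proof -
  let ?K = "kcomp E ends col g"
  let ?c = "kswap E ends col g"
  have pr: "proper E ends col" using goodD1[OF gd] .
  have Km: "\<And>f. f \<in> ?K \<Longrightarrow> f \<in> E \<and> col f \<in> {1,2}" using kcomp_mem[of g E col, OF g] by blast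
  have Kc: "f \<in> ?K" if a: "e \<in> ?K" "f \<in> E" "col f \<in> {1,2}" "ladj ends e f" for e f
    using Km[OF a(1)] by (intro kcomp_closed[OF a(1) _ _ a(2,3,4)]) auto
  have cK: "\<And>e. e \<in> ?K \<Longrightarrow> ?c e = 3 - col e" unfolding kswap_def by auto
  have cN: "\<And>e. e \<notin> ?K \<Longrightarrow> ?c e = col e" unfolding kswap_def by auto
  have prc: "proper E ends ?c"
    unfolding proper_def
  proof (intro conjI ballI impI)
    fix e assume "e \<in> E"
    then show "?c e \<in> {1,2,3,4}" using properD1[OF pr] Km cK cN
      by (cases "e \<in> ?K") fastforce+
  next
    fix e f assume ef: "e \<in> E" "f \<in> E" "ladj ends e f"
    have d: "col e \<noteq> col f" using properD2[OF pr ef] .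
    show "?c e \<noteq> ?c f"
    proof (cases "e \<in> ?K")
      case True
      show ?thesis
      proof (cases "f \<in> ?K")
        case True then show ?thesis using \<open>e \<in> ?K\<close> cK Km d by fastforce
      next
        case False
        then have "col f \<notin> {1,2}" using Kc[OF True ef(2) _ ef(3)] by blast
        then show ?thesis using cK[OF True] cN[OF False] Km[OF True] by auto
      qed
    next
      case False
      show ?thesis
      proof (cases "f \<in> ?K")
        case True
        have "ladj ends f e" using ef(3) ladj_sym by metis
        then have "col e \<notin> {1,2}" using Kc[OF True ef(1)] False by blast
        then show ?thesis using cK[OF True] cN[OF False] Km[OF True] by auto
      next
        case False then show ?thesis using \<open>e \<notin> ?K\<close> cN d by simp
      qed
    qed
  next
    fix e f g' assume efg: "e \<in> E" "f \<in> E" "g' \<in> E" "e \<noteq> f" "?c e = ?c f" "3 \<le> ?c e"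
      "ladj ends e g'" "ladj ends g' f"
    have "e \<notin> ?K" using efg(6) cK Km by fastforce
    moreover have "f \<notin> ?K" using efg(5,6) cK Km by fastforce
    ultimately have "col e = col f" "3 \<le> col e" using efg(5,6) cN by auto
    then show False using properD3[OF pr efg(1,2,3,4)] efg(7,8) by blast
  qed
  show ?thesis unfolding good_def
  proof (intro conjI)
    show "proper E ends ?c" by fact
  next
    show "\<forall>v. card (inc E ends v) = 3 \<longrightarrow> 1 \<in> ?c ` inc E ends v \<and> 2 \<in> ?c ` inc E ends v"
    proof (intro allI impI)
    fix v assume v: "card (inc E ends v) = 3"
    have "1 \<in> col ` inc E ends v" "2 \<in> col ` inc E ends v" using goodD2[OF gd v] goodD3[OF gd v] by auto
    then obtain e1 e2 where e: "e1 \<in> inc E ends v" "col e1 = 1" "e2 \<in> inc E ends v" "col e2 = 2"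
      by (metis imageE)
    have l12: "ladj ends e1 e2" "ladj ends e2 e1" using e by (auto intro: ladjI)
    show "1 \<in> ?c ` inc E ends v \<and> 2 \<in> ?c ` inc E ends v"
    proof (cases "e1 \<in> ?K")
      case True
      then have "e2 \<in> ?K" using Kc[of e1 e2] l12 e by auto
      then have "?c e1 = 2" "?c e2 = 1" using cK True e by auto
      then show ?thesis using e by (metis image_eqI)
    next
      case False
      then have "e2 \<notin> ?K" using Kc[of e2 e1] l12 e by auto
      then have "?c e1 = 1" "?c e2 = 2" using cN False e by auto
      then show ?thesis using e by (metis image_eqI)
    qed
    qed
  next
    show "\<forall>e\<in>E. ends e \<inter> D \<noteq> {} \<longrightarrow> ?c e \<le> 2"
    proof (intro ballI impI)
    fix e assume "e \<in> E" "ends e \<inter> D \<noteq> {}"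
    then have "col e \<le> 2" using goodD4[OF gd] by blast
    then show "?c e \<le> 2" using cK cN Km by (cases "e \<in> ?K") fastforce+
    qed
  qed
qed

subsection \<open>Components of a graph of maximum degree two have at most two leaves\<close>

definition crel :: "'e set \<Rightarrow> ('e \<Rightarrow> 'v set) \<Rightarrow> ('e \<times> 'e) set" where
  "crel C ends = {(x,y). x \<in> C \<and> y \<in> C \<and> ladj ends x y}"

definition conn :: "'e set \<Rightarrow> ('e \<Rightarrow> 'v set) \<Rightarrow> bool" where
  "conn C ends \<longleftrightarrow> (\<forall>e\<in>C. \<forall>f\<in>C. (e,f) \<in> (crel C ends)\<^sup>*)"

lemma conn_remove:
  assumes cn: "conn C ends" and i1: "inc C ends v1 = {e1}" and e1: "ends e1 = {v1, x}"
    and ix: "inc C ends x = {e1, e'}" and ne: "e' \<noteq> e1"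
  shows "conn (C - {e1}) ends"
proof -
  let ?R = "crel C ends" and ?R' = "crel (C - {e1}) ends"
  have e'C: "e' \<in> C - {e1}" using ix ne by auto
  have nb: "\<And>h. h \<in> C \<Longrightarrow> ladj ends h e1 \<Longrightarrow> h = e'"
  proof -
    fix h assume h: "h \<in> C" "ladj ends h e1"
    then obtain w where w: "h \<noteq> e1" "w \<in> ends h" "w \<in> ends e1" by (auto elim: ladjE)
    then have "w = v1 \<or> w = x" using e1 by auto
    then show "h = e'"
    proof
      assume "w = v1" then have "h \<in> inc C ends v1" using h w by auto
      then show ?thesis using i1 w(1) by auto
    next
      assume "w = x" then have "h \<in> inc C ends x" using h w by auto
      then show ?thesis using ix w(1) by auto
    qed
  qed
  have main: "(f, g) \<in> ?R\<^sup>* \<Longrightarrow> f \<in> C - {e1} \<Longrightarrow>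
      (g \<noteq> e1 \<longrightarrow> (f, g) \<in> ?R'\<^sup>*) \<and> (g = e1 \<longrightarrow> (f, e') \<in> ?R'\<^sup>*)" for f g
  proof (induction rule: rtrancl_induct)
    case base then show ?case by auto
  next
    case (step h g)
    have hg: "h \<in> C" "g \<in> C" "ladj ends h g" using step(2) unfolding crel_def by auto
    show ?case
    proof (cases "h = e1")
      case True
      then have fe: "(f, e') \<in> ?R'\<^sup>*" using step by auto
      have "ladj ends g e1" using hg(3) True ladj_sym by metis
      then have "g = e'" using nb hg(2) by blast
      moreover have "g \<noteq> e1" using hg(3) True unfolding ladj_def by auto
      ultimately show ?thesis using fe by auto
    next
      case False
      then have fh: "(f, h) \<in> ?R'\<^sup>*" using step by auto
      show ?thesis
      proof (cases "g = e1")
        case True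
        then have "h = e'" using nb hg(1,3) by blast
        then show ?thesis using fh True by auto
      next
        case False
        then have "(h, g) \<in> ?R'" using hg \<open>h \<noteq> e1\<close> unfolding crel_def by auto
        then show ?thesis using fh False by (auto intro: rtrancl_into_rtrancl)
      qed
    qed
  qed
  show ?thesis unfolding conn_def
  proof (intro ballI)
    fix f g assume fg: "f \<in> C - {e1}" "g \<in> C - {e1}"
    then have "(f, g) \<in> ?R\<^sup>*" using cn unfolding conn_def by auto
    then show "(f, g) \<in> ?R'\<^sup>*" using main fg by auto
  qed
qed

lemma conn_single:
  assumes cn: "conn C ends" and i1: "inc C ends v1 = {e1}" and e1: "ends e1 = {v1, x}"
    and ix: "inc C ends x = {e1}"
  shows "C = {e1}"
proof -
  have e1C: "e1 \<in> C" using i1 by auto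
  have "(e1, f) \<in> (crel C ends)\<^sup>* \<Longrightarrow> f = e1" for f
  proof (induction rule: rtrancl_induct)
    case base then show ?case by simp
  next
    case (step h g)
    then have hg: "h = e1" "g \<in> C" "ladj ends e1 g" unfolding crel_def by auto
    then obtain w where w: "e1 \<noteq> g" "w \<in> ends e1" "w \<in> ends g" by (auto elim: ladjE)
    then have "g \<in> inc C ends v1 \<or> g \<in> inc C ends x" using e1 hg(2) by auto
    then show ?case using i1 ix w(1) by auto
  qed
  then show ?thesis using cn e1C unfolding conn_def by blast
qed

lemma lemK:
  assumes "finite C" "\<forall>e\<in>C. card (ends e) = 2" "\<forall>v. card (inc C ends v) \<le> 2" "conn C ends"
    "v1 \<noteq> v2" "v1 \<noteq> v3" "v2 \<noteq> v3"
    "card (inc C ends v1) = 1" "card (inc C ends v2) = 1" "card (inc C ends v3) = 1"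
  shows False
  using assms
proof (induction "card C" arbitrary: C v1 v2 v3 rule: less_induct)
  case less
  obtain e1 where i1: "inc C ends v1 = {e1}" using less.prems(8) card_1_singletonE by blast
  then have e1C: "e1 \<in> C" "v1 \<in> ends e1" by auto
  obtain x where x: "ends e1 = {v1, x}" "x \<noteq> v1" using ends2[OF bspec[OF less.prems(2) e1C(1)] e1C(2)] by blast
  have xin: "e1 \<in> inc C ends x" using e1C x by auto
  have finx: "finite (inc C ends x)" using less.prems(1) by (rule finite_inc)
  show False
  proof (cases "card (inc C ends x) = 1")
    case True
    then have ix: "inc C ends x = {e1}" using xin by (metis card_1_singletonE singletonD)
    have C1: "C = {e1}" using conn_single[OF less.prems(4) i1 x(1) ix] .
    have "\<And>v. card (inc C ends v) = 1 \<Longrightarrow> v \<in> ends e1"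
    proof -
      fix v assume "card (inc C ends v) = 1"
      then obtain e where "inc C ends v = {e}" using card_1_singletonE by blast
      then have "e \<in> C" "v \<in> ends e" by auto
      then show "v \<in> ends e1" using C1 by auto
    qed
    then have "v2 \<in> {v1,x}" "v3 \<in> {v1,x}" using less.prems(9,10) x(1) by auto
    then show False using less.prems(5,6,7) by auto
  next
    case False
    have "card (inc C ends x) \<noteq> 0" using xin finx by auto
    then have "card (inc C ends x) = 2" using False less.prems(3) by (metis le_Suc_eq le_zero_eq numeral_2_eq_2 One_nat_def)
    then obtain e' where ix: "inc C ends x = {e1, e'}" "e' \<noteq> e1"
      using ends2[of "inc C ends x" e1] xin by metis
    let ?C = "C - {e1}"
    have cc: "card ?C < card C" by (rule card_Diff1_less[OF less.prems(1) e1C(1)])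
    have fin: "finite ?C" using less.prems(1) by auto
    have two: "\<forall>e\<in>?C. card (ends e) = 2" using less.prems(2) by auto
    have deg: "\<forall>v. card (inc ?C ends v) \<le> 2"
    proof
      fix v
      have "inc ?C ends v \<subseteq> inc C ends v" by auto
      then show "card (inc ?C ends v) \<le> 2" using card_mono[OF finite_inc[OF less.prems(1)]] less.prems(3)
        by (meson order_trans)
    qed
    have cn: "conn ?C ends" using conn_remove[OF less.prems(4) i1 x(1) ix] .
    have x1: "inc ?C ends x = {e'}" using ix by auto
    have v2x: "v2 \<noteq> x" using less.prems(9) \<open>card (inc C ends x) = 2\<close> by auto
    have v3x: "v3 \<noteq> x" using less.prems(10) \<open>card (inc C ends x) = 2\<close> by auto
    have "inc ?C ends v2 = inc C ends v2" using x(1) less.prems(5) v2x by auto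
    moreover have "inc ?C ends v3 = inc C ends v3" using x(1) less.prems(6) v3x by auto
    ultimately show False
      using less.hyps[OF cc fin two deg cn, of x v2 v3] x1 v2x v3x less.prems(7,9,10) by auto
  qed
qed

lemma kcomp_conn:
  assumes g: "g \<in> E" "col g \<in> {1,2}"
  shows "conn (kcomp E ends col g) ends"
proof -
  let ?K = "kcomp E ends col g"
  have reach: "(g, y) \<in> (krel E ends col)\<^sup>* \<Longrightarrow> (g, y) \<in> (crel ?K ends)\<^sup>*" for y
  proof (induction rule: rtrancl_induct)
    case base then show ?case by simp
  next
    case (step h y)
    have "h \<in> ?K" "y \<in> ?K" using step(1,2) unfolding kcomp_def by (auto intro: rtrancl_into_rtrancl)
    then have "(h, y) \<in> crel ?K ends" using step(2) unfolding crel_def krel_def by auto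
    then show ?case using step(3) by (auto intro: rtrancl_into_rtrancl)
  qed
  have sy: "sym ((crel ?K ends)\<^sup>*)" by (rule sym_rtrancl) (auto simp: sym_def crel_def ladj_def)
  show ?thesis unfolding conn_def
  proof (intro ballI)
    fix e f assume "e \<in> ?K" "f \<in> ?K"
    then have "(g, e) \<in> (crel ?K ends)\<^sup>*" "(g, f) \<in> (crel ?K ends)\<^sup>*" using reach unfolding kcomp_def by auto
    then have "(e, g) \<in> (crel ?K ends)\<^sup>*" using sy unfolding sym_def by blast
    then show "(e, f) \<in> (crel ?K ends)\<^sup>*" using \<open>(g, f) \<in> _\<close> by (rule rtrancl_trans)
  qed
qed

lemma kcomp_deg:
  assumes pr: "proper E ends col" and g: "g \<in> E" "col g \<in> {1,2}" and fin: "finite E"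
  shows "card (inc (kcomp E ends col g) ends v) \<le> 2"
proof -
  let ?A = "inc (kcomp E ends col g) ends v"
  have sub: "\<And>e. e \<in> ?A \<Longrightarrow> e \<in> E \<and> col e \<in> {1,2}" using kcomp_mem[of g E col, OF g] by auto
  have "inj_on col ?A"
  proof (rule inj_onI)
    fix a b assume ab: "a \<in> ?A" "b \<in> ?A" "col a = col b"
    show "a = b"
    proof (rule ccontr)
      assume "a \<noteq> b"
      then have "ladj ends a b" using ab by (auto intro: ladjI)
      then show False using properD2[OF pr] ab sub by blast
    qed
  qed
  moreover have "col ` ?A \<subseteq> {1,2}"
  proof
    fix c assume "c \<in> col ` ?A"
    then obtain e where "e \<in> ?A" "c = col e" by blast
    then show "c \<in> {1,2}" using sub[of e] by simp
  qed
  ultimately show ?thesis using card_inj_on_le[of col ?A "{1,2::nat}"] by auto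
qed

definition nbr :: "'e set \<Rightarrow> ('e \<Rightarrow> 'v set) \<Rightarrow> 'v \<Rightarrow> 'v set" where
  "nbr E ends w = (\<Union>e\<in>inc E ends w. ends e) - {w}"

lemma nbr_iff: "x \<in> nbr E ends w \<longleftrightarrow> x \<noteq> w \<and> (\<exists>e\<in>E. w \<in> ends e \<and> x \<in> ends e)"
  unfolding nbr_def by auto

lemma del_single_new: "e \<in> E \<Longrightarrow> e \<notin> del E ends {w} \<Longrightarrow> e \<in> inc E ends w"
  by auto

lemma card_le1_cases:
  assumes "card A \<le> 1" "finite A"
  obtains "A = {}" | g where "A = {g}"
proof (cases "card A = 0")
  case True then show ?thesis using that(1) assms(2) by auto
next
  case False
  then have "card A = 1" using assms(1) by auto
  then obtain g where "A = {g}" by (rule card_1_singletonE)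
  then show ?thesis by (rule that(2))
qed

lemma card_le2_two:
  assumes "card A \<le> 2" "finite A" "a \<in> A" "b \<in> A" "a \<noteq> b"
  shows "A = {a, b}"
proof (rule ccontr)
  assume "A \<noteq> {a,b}"
  then obtain c where "c \<in> A" "c \<noteq> a" "c \<noteq> b" using assms(3,4) by blast
  then have "{a,b,c} \<subseteq> A" "card {a,b,c} = 3" using assms(3,4,5) by auto
  then show False using card_mono[OF assms(2)] assms(1) by (metis not_less_eq_eq numeral_3_eq_3 numeral_2_eq_2)
qed

lemma dhyp_del_nbr:
  assumes wf: "wf E ends" and dh: "dhyp E ends D" and low: "\<forall>x\<in>nbr E ends u. card (inc E ends x) \<le> 2"
  shows "\<forall>p\<in>D \<union> nbr E ends u. card (inc (del E ends {u}) ends p) \<le> 1"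
proof
  fix p assume p: "p \<in> D \<union> nbr E ends u"
  have fin: "finite E" using wfD(1)[OF wf] .
  show "card (inc (del E ends {u}) ends p) \<le> 1"
  proof (cases "p \<in> D")
    case True
    then show ?thesis using dh card_inc_del_le[OF fin, of ends "{u}" p] unfolding dhyp_def by force
  next
    case False
    then have pn: "p \<in> nbr E ends u" using p by auto
    then obtain e where e: "e \<in> E" "u \<in> ends e" "p \<in> ends e" "p \<noteq> u" unfolding nbr_iff by auto
    have sub: "inc (del E ends {u}) ends p \<subseteq> inc E ends p - {e}" using e by auto
    have "card (inc E ends p - {e}) = card (inc E ends p) - 1" using e fin by (simp add: finite_inc)
    moreover have "card (inc E ends p) \<le> 2" using low pn by auto
    ultimately show ?thesis using card_mono[OF _ sub] fin finite_inc
      by (metis (no_types, lifting) diff_le_mono finite_Diff le_trans one_add_one add_diff_cancel_right')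
  qed
qed

lemma pair_choice:
  fixes fi fj :: nat
  assumes "fi \<in> {0,1,2}" "fj \<in> {0,1,2}" "\<not>(fi \<noteq> 0 \<and> fi = fj)"
  obtains "fi \<noteq> 1" "fj \<noteq> 2" | "fi \<noteq> 2" "fj \<noteq> 1"
  using assms by auto

definition fcol :: "('e \<Rightarrow> nat) \<Rightarrow> 'e set \<Rightarrow> nat" where
  "fcol c A = (if A = {} then 0 else c (SOME g. g \<in> A))"

lemma fcol_props:
  assumes "card A \<le> 1" "finite A" "\<forall>g\<in>A. c g \<in> {1,2}"
  shows "fcol c A \<in> {0,1,2}" "\<And>g. g \<in> A \<Longrightarrow> c g = fcol c A" "A = {} \<Longrightarrow> fcol c A = 0"
    "A \<noteq> {} \<Longrightarrow> fcol c A \<noteq> 0"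
proof -
  show "fcol c A \<in> {0,1,2}"
  proof (cases "A = {}")
    case True then show ?thesis unfolding fcol_def by simp
  next
    case False then have "(SOME g. g \<in> A) \<in> A" by (simp add: some_in_eq)
    then show ?thesis using assms(3) False unfolding fcol_def by auto
  qed
  show "\<And>g. g \<in> A \<Longrightarrow> c g = fcol c A"
  proof -
    fix g assume g: "g \<in> A"
    then obtain h where "A = {h}" using card_le1_cases[OF assms(1,2)] by blast
    then show "c g = fcol c A" using g unfolding fcol_def by auto
  qed
  show "A = {} \<Longrightarrow> fcol c A = 0" unfolding fcol_def by simp
  show "A \<noteq> {} \<Longrightarrow> fcol c A \<noteq> 0"
  proof -
    assume A: "A \<noteq> {}"
    then have "(SOME g. g \<in> A) \<in> A" by (simp add: some_in_eq)
    then show ?thesis using assms(3) A unfolding fcol_def by auto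
  qed
qed

lemma inc_single: "inc E ends w = {a} \<Longrightarrow> f \<in> E \<Longrightarrow> w \<in> ends f \<Longrightarrow> f = a"
  by (metis inc_iff singletonD)

lemma inc_pair: "inc E ends w = {a, b} \<Longrightarrow> f \<in> E \<Longrightarrow> w \<in> ends f \<Longrightarrow> f = a \<or> f = b"
  by (metis inc_iff insertE singletonD)

lemma ladj_at:
  assumes "ladj ends e f" "ends e = {p, q}"
  obtains "p \<in> ends f" "f \<noteq> e" | "q \<in> ends f" "f \<noteq> e"
  using assms unfolding ladj_def by auto

lemma other_end:
  assumes "wf E ends" "a \<in> E" "w \<in> ends a"
  obtains x where "ends a = {w, x}" "x \<noteq> w"
  using ends2[OF wfD(2)[OF assms(1,2)] assms(3)] by blast

lemma red_R2:
  assumes wf: "wf E ends" and dh: "dhyp E ends D"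
    and nohigh: "\<forall>v. card (inc E ends v) \<le> 2"
    and w: "a0 \<in> inc E ends w"
    and IH: "\<And>E' D'. card E' < card E \<Longrightarrow> wf E' ends \<Longrightarrow> dhyp E' ends D' \<Longrightarrow> \<exists>col. good E' ends D' col"
  shows "\<exists>col. good E ends D col"
proof -
  have fin: "finite E" using wfD(1)[OF wf] .
  define E' where "E' = del E ends {w}"
  define D' where "D' = D \<union> nbr E ends w"
  have a0: "a0 \<in> E" "a0 \<notin> E'" using w unfolding E'_def by auto
  have lt: "card E' < card E"
    by (rule psubset_card_mono[OF fin]) (use a0 in \<open>auto simp: E'_def\<close>)
  have wf': "wf E' ends" unfolding E'_def by (rule wf_del[OF wf])
  have low: "\<forall>x\<in>nbr E ends w. card (inc E ends x) \<le> 2" using nohigh by blast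
  have d1: "\<forall>p\<in>D'. card (inc E' ends p) \<le> 1"
    using dhyp_del_nbr[OF wf dh low] unfolding E'_def D'_def .
  have dh': "dhyp E' ends D'"
    unfolding dhyp_def
  proof (intro conjI allI impI)
    show "\<forall>p\<in>D'. card (inc E' ends p) \<le> 1" by (rule d1)
  next
    fix v assume "card (inc E' ends v) = 3"
    moreover have "card (inc E' ends v) \<le> card (inc E ends v)" unfolding E'_def by (rule card_inc_del_le[OF fin])
    ultimately have False using nohigh[rule_format, of v] by linarith
    then show "dcnt E' ends D' v \<le> 2" by simp
  qed
  obtain c' where gd': "good E' ends D' c'" using IH[OF lt wf' dh'] by blast
  have pr': "proper E' ends c'" by (rule goodD1[OF gd'])
  have new: "\<And>e. e \<in> E \<Longrightarrow> e \<notin> E' \<Longrightarrow> e \<in> inc E ends w" unfolding E'_def by auto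
  have finE': "finite E'" using wfD(1)[OF wf'] .
  have oldc: "\<And>x e. x \<in> nbr E ends w \<Longrightarrow> e \<in> inc E' ends x \<Longrightarrow> c' e \<in> {1,2}"
  proof -
    fix x e assume "x \<in> nbr E ends w" "e \<in> inc E' ends x"
    then have "c' e \<le> 2" "c' e \<in> {1,2,3,4}" using goodD4[OF gd'] properD1[OF pr'] unfolding D'_def by auto
    then show "c' e \<in> {1,2}" by auto
  qed
  have oldcard: "\<And>x. x \<in> nbr E ends w \<Longrightarrow> card (inc E' ends x) \<le> 1" using d1 unfolding D'_def by auto
  have oldw: "inc E' ends w = {}" unfolding E'_def by auto
  have nbrI: "\<And>a x. a \<in> inc E ends w \<Longrightarrow> ends a = {w, x} \<Longrightarrow> x \<noteq> w \<Longrightarrow> x \<in> nbr E ends w"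
    unfolding nbr_iff by auto
  let ?F = "\<lambda>x. fcol c' (inc E' ends x)"
  have Fp: "\<And>x. x \<in> nbr E ends w \<Longrightarrow> ?F x \<in> {0,1,2} \<and> (\<forall>g\<in>inc E' ends x. c' g = ?F x)
             \<and> (inc E' ends x = {} \<longleftrightarrow> ?F x = 0)"
  proof -
    fix x assume x: "x \<in> nbr E ends w"
    have A: "card (inc E' ends x) \<le> 1" "finite (inc E' ends x)" "\<forall>g\<in>inc E' ends x. c' g \<in> {1,2}"
      using oldcard[OF x] finite_inc[OF finE'] oldc[OF x] by auto
    show "?F x \<in> {0,1,2} \<and> (\<forall>g\<in>inc E' ends x. c' g = ?F x) \<and> (inc E' ends x = {} \<longleftrightarrow> ?F x = 0)"
      using fcol_props[OF A] by blast
  qed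
  have gdE': "\<And>c. (\<And>e. e \<in> E' \<Longrightarrow> c e = c' e) \<Longrightarrow> good E' ends D' c"
    using good_cong gd' by metis
  have two: "\<forall>e\<in>E. card (ends e) = 2" using wfD(2)[OF wf] by blast
  have nh3: "\<forall>v. card (inc E ends v) = 3 \<longrightarrow> P v" for P
  proof (intro allI impI)
    fix v assume "card (inc E ends v) = 3" then show "P v" using nohigh[rule_format, of v] by linarith
  qed
  have cw: "card (inc E ends w) = 1 \<or> card (inc E ends w) = 2"
    using nohigh[rule_format, of w] w finite_inc[OF fin, of ends w] by (cases "card (inc E ends w)") auto
  show ?thesis
  proof (cases "card (inc E ends w) = 1")
    case True
    then obtain a where ia: "inc E ends w = {a}" by (rule card_1_singletonE)
    then have aE: "a \<in> E" "w \<in> ends a" by auto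
    obtain x where x: "ends a = {w, x}" "x \<noteq> w" using other_end[OF wf aE] by blast
    have xn: "x \<in> nbr E ends w" using nbrI[OF _ x] ia by auto
    define s :: nat where "s = (if ?F x = 1 then 2 else 1)"
    have s: "s \<in> {1,2}" "s \<noteq> ?F x" unfolding s_def by auto
    define col where "col = (\<lambda>e. if e \<in> E' then c' e else s)"
    have ca: "col a = s" using aE unfolding col_def E'_def by auto
    have gdc: "good E' ends D' col" by (rule gdE') (simp add: col_def)
    have newa: "\<And>e. e \<in> E \<Longrightarrow> e \<notin> E' \<Longrightarrow> e = a"
      using new inc_single[OF ia] by (meson inc_iff)
    have Na: "E - del E ends {w} = {a}"
    proof
      show "E - del E ends {w} \<subseteq> {a}" using newa unfolding E'_def by blast
      show "{a} \<subseteq> E - del E ends {w}" using aE by auto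
    qed
    have pr: "proper E ends col"
    proof (rule proper_ext[OF two])
      show "proper (del E ends {w}) ends col" using goodD1[OF gdc] unfolding E'_def .
      show "\<forall>e\<in>E - del E ends {w}. col e \<in> {1,2,3,4}" unfolding Na using ca s by auto
      show "\<forall>e\<in>E - del E ends {w}. \<forall>f\<in>E. ladj ends e f \<longrightarrow> col e \<noteq> col f"
      proof (intro ballI impI)
        fix e f assume e: "e \<in> E - del E ends {w}" and f: "f \<in> E" and l: "ladj ends e f"
        have ea: "e = a" using e unfolding Na by auto
        show "col e \<noteq> col f"
        proof (rule ladj_at[OF l[unfolded ea] x(1)])
          assume "w \<in> ends f" "f \<noteq> a" then show ?thesis using inc_single[OF ia f] by simp
        next
          assume xf: "x \<in> ends f" "f \<noteq> a"
          show ?thesis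
          proof (cases "f \<in> E'")
            case True
            then have "col f = ?F x" using Fp[OF xn] xf unfolding col_def by auto
            then show ?thesis using ea ca s by auto
          next
            case False then show ?thesis using newa[OF f False] xf by simp
          qed
        qed
      qed
      show "\<forall>e\<in>E - del E ends {w}. \<forall>f\<in>E. \<forall>g\<in>E. e \<noteq> f \<longrightarrow> col e = col f \<longrightarrow> 3 \<le> col e
                \<longrightarrow> ladj ends e g \<longrightarrow> ladj ends g f \<longrightarrow> False"
        unfolding Na using ca s by auto
    qed
    have "good E ends D col"
    proof (rule good_ext[OF fin gdc[unfolded E'_def] pr])
      show "\<forall>e\<in>E - del E ends {w}. ends e \<inter> D \<noteq> {} \<longrightarrow> col e \<le> 2"
        unfolding Na using ca s by auto
    qed (use nh3 in \<open>auto simp: D'_def\<close>)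
    then show ?thesis by blast
  next
    case False
    then have c2: "card (inc E ends w) = 2" using cw by auto
    then obtain a b where iab: "inc E ends w = {a, b}" "a \<noteq> b" using card_2_iff by metis
    then have aE: "a \<in> E" "w \<in> ends a" and bE: "b \<in> E" "w \<in> ends b" by auto
    obtain x where x: "ends a = {w, x}" "x \<noteq> w" using other_end[OF wf aE] by blast
    obtain y where y: "ends b = {w, y}" "y \<noteq> w" using other_end[OF wf bE] by blast
    have xn: "x \<in> nbr E ends w" using nbrI[OF _ x] iab by auto
    have yn: "y \<in> nbr E ends w" using nbrI[OF _ y] iab by auto
    have newab: "\<And>e. e \<in> E \<Longrightarrow> e \<notin> E' \<Longrightarrow> e = a \<or> e = b"
      using new inc_pair[OF iab(1)] by (meson inc_iff)
    have abE': "a \<notin> E'" "b \<notin> E'" using aE bE unfolding E'_def by auto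
    have Nab: "E - del E ends {w} = {a, b}"
    proof
      show "E - del E ends {w} \<subseteq> {a, b}" using newab unfolding E'_def by blast
      show "{a, b} \<subseteq> E - del E ends {w}" using aE bE by auto
    qed
    show ?thesis
    proof (cases "?F x \<noteq> 0 \<and> ?F x = ?F y")
      case False
      have f01: "?F x \<in> {0,1,2}" "?F y \<in> {0,1,2}" using Fp xn yn by auto
      obtain sa sb :: nat where s: "sa \<in> {1,2}" "sb \<in> {1,2}" "sa \<noteq> ?F x" "sb \<noteq> ?F y" "sa \<noteq> sb"
      proof (rule pair_choice[OF f01 False])
        assume "?F x \<noteq> 1" "?F y \<noteq> 2" then show ?thesis using that[of 1 2] by auto
      next
        assume "?F x \<noteq> 2" "?F y \<noteq> 1" then show ?thesis using that[of 2 1] by auto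
      qed
      define col where "col = (\<lambda>e. if e \<in> E' then c' e else if e = a then sa else sb)"
      have ca: "col a = sa" "col b = sb" using abE' iab(2) unfolding col_def by auto
      have gdc: "good E' ends D' col" by (rule gdE') (simp add: col_def)
      have oldcol: "\<And>f z. f \<in> E' \<Longrightarrow> z \<in> nbr E ends w \<Longrightarrow> z \<in> ends f \<Longrightarrow> col f = ?F z"
        using Fp unfolding col_def by auto
      have pr: "proper E ends col"
      proof (rule proper_ext[OF two])
        show "proper (del E ends {w}) ends col" using goodD1[OF gdc] unfolding E'_def .
        show "\<forall>e\<in>E - del E ends {w}. col e \<in> {1,2,3,4}" unfolding Nab using ca s by auto
        show "\<forall>e\<in>E - del E ends {w}. \<forall>f\<in>E. ladj ends e f \<longrightarrow> col e \<noteq> col f"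
        proof (intro ballI impI)
          fix e f assume e: "e \<in> E - del E ends {w}" and f: "f \<in> E" and l: "ladj ends e f"
          have eab: "e = a \<or> e = b" using e unfolding Nab by auto
          have fw: "w \<in> ends f \<Longrightarrow> f \<noteq> e \<Longrightarrow> col e \<noteq> col f"
            using inc_pair[OF iab(1) f] eab ca s by auto
          show "col e \<noteq> col f"
          proof (cases "e = a")
            case True
            show ?thesis
            proof (rule ladj_at[OF l[unfolded True] x(1)])
              assume "w \<in> ends f" "f \<noteq> a" then show ?thesis using fw True by auto
            next
              assume xf: "x \<in> ends f" "f \<noteq> a"
              show ?thesis
              proof (cases "f \<in> E'")
                case True then show ?thesis using oldcol[OF True xn xf(1)] s ca \<open>e = a\<close> by auto
              next
                case False then have "f = b" using newab[OF f False] xf by auto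
                then show ?thesis using ca s \<open>e = a\<close> by auto
              qed
            qed
          next
            case False
            then have eb: "e = b" using eab by auto
            show ?thesis
            proof (rule ladj_at[OF l[unfolded eb] y(1)])
              assume "w \<in> ends f" "f \<noteq> b" then show ?thesis using fw eb by auto
            next
              assume yf: "y \<in> ends f" "f \<noteq> b"
              show ?thesis
              proof (cases "f \<in> E'")
                case True then show ?thesis using oldcol[OF True yn yf(1)] s ca eb by auto
              next
                case False then have "f = a" using newab[OF f False] yf by auto
                then show ?thesis using ca s eb by auto
              qed
            qed
          qed
        qed
        show "\<forall>e\<in>E - del E ends {w}. \<forall>f\<in>E. \<forall>g\<in>E. e \<noteq> f \<longrightarrow> col e = col f \<longrightarrow> 3 \<le> col e
                  \<longrightarrow> ladj ends e g \<longrightarrow> ladj ends g f \<longrightarrow> False"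
          unfolding Nab using ca s by auto
      qed
      have "good E ends D col"
      proof (rule good_ext[OF fin gdc[unfolded E'_def] pr])
        show "\<forall>e\<in>E - del E ends {w}. ends e \<inter> D \<noteq> {} \<longrightarrow> col e \<le> 2"
          unfolding Nab using ca s by auto
      qed (use nh3 in \<open>auto simp: D'_def\<close>)
      then show ?thesis by blast
    next
      case True
      define c where "c = ?F x"
      have c: "c \<in> {1,2}" "?F y = c" using True Fp[OF xn] unfolding c_def by auto
      have nex: "inc E' ends x \<noteq> {}" using True Fp[OF xn] by auto
      have ney: "inc E' ends y \<noteq> {}" using True Fp[OF yn] by auto
      obtain ga where ga: "inc E' ends x = {ga}"
        using card_le1_cases[OF oldcard[OF xn] finite_inc[OF finE']] nex by blast
      obtain gb where gb: "inc E' ends y = {gb}"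
        using card_le1_cases[OF oldcard[OF yn] finite_inc[OF finE']] ney by blast
      have gai: "ga \<in> inc E' ends x" using ga by simp
      have gbi: "gb \<in> inc E' ends y" using gb by simp
      have gaE: "ga \<in> E'" "x \<in> ends ga" "c' ga = c" using gai Fp[OF xn] c_def by auto
      have gbE: "gb \<in> E'" "y \<in> ends gb" "c' gb = c" using gbi Fp[OF yn] c by auto
      obtain x' where x': "ends ga = {x, x'}" "x' \<noteq> x"
        using other_end[OF wf' gaE(1,2)] by blast
      let ?X = "inc E' ends x'"
      have Xc: "card ?X \<le> 2" using card_inc_del_le[OF fin, of ends "{w}" x'] nohigh unfolding E'_def
        by (meson order_trans)
      have Lf: "\<exists>d\<in>{3,4}. d \<notin> c' ` ?X"
      proof (rule L_free)
        show "finite ?X" by (rule finite_inc[OF finE'])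
        show "card ?X \<le> 3" using Xc by simp
        show "card ?X = 3 \<longrightarrow> 1 \<in> c' ` ?X \<and> 2 \<in> c' ` ?X" using Xc by simp
        show "ga \<in> ?X" using gaE x' by simp
        show "c' ga \<in> {1,2}" using gaE c by simp
      qed
      then obtain d where d: "d \<in> {3,4}" "d \<notin> c' ` ?X" by blast
      define col where "col = (\<lambda>e. if e \<in> E' then c' e else if e = a then d else 3 - c)"
      have ca: "col a = d" "col b = 3 - c" using abE' iab(2) unfolding col_def by auto
      have gdc: "good E' ends D' col" by (rule gdE') (simp add: col_def)
      have cga: "col ga = c" "col gb = c" using gaE gbE unfolding col_def by auto
      have atx: "f = ga \<or> f = a \<or> f = b" if "f \<in> E" "x \<in> ends f" for f
      proof (cases "f \<in> E'")
        case True then show ?thesis using inc_single[OF ga True that(2)] by simp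
      next
        case False then show ?thesis using newab[OF that(1) False] by simp
      qed
      have aty: "f = gb \<or> f = a \<or> f = b" if "f \<in> E" "y \<in> ends f" for f
      proof (cases "f \<in> E'")
        case True then show ?thesis using inc_single[OF gb True that(2)] by simp
      next
        case False then show ?thesis using newab[OF that(1) False] by simp
      qed
      have atw: "\<And>f. f \<in> E \<Longrightarrow> w \<in> ends f \<Longrightarrow> f = a \<or> f = b" using inc_pair[OF iab(1)] by blast
      have atx': "\<And>f. f \<in> E \<Longrightarrow> x' \<in> ends f \<Longrightarrow> f = a \<or> f = b \<or> col f \<noteq> d"
      proof -
        fix f assume f: "f \<in> E" "x' \<in> ends f"
        show "f = a \<or> f = b \<or> col f \<noteq> d"
        proof (cases "f \<in> E'")
          case True then have "f \<in> ?X" using f by auto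
          then show ?thesis using d True unfolding col_def by auto
        next
          case False then show ?thesis using newab[OF f(1) False] by auto
        qed
      qed
      have dn: "d \<noteq> c" "d \<noteq> 3 - c" "c \<noteq> 3 - c" using d c by auto
      have pr: "proper E ends col"
      proof (rule proper_ext[OF two])
        show "proper (del E ends {w}) ends col" using goodD1[OF gdc] unfolding E'_def .
        show "\<forall>e\<in>E - del E ends {w}. col e \<in> {1,2,3,4}" unfolding Nab using ca c d by auto
        show "\<forall>e\<in>E - del E ends {w}. \<forall>f\<in>E. ladj ends e f \<longrightarrow> col e \<noteq> col f"
        proof (intro ballI impI)
          fix e f assume e: "e \<in> E - del E ends {w}" and f: "f \<in> E" and l: "ladj ends e f"
          have eab: "e = a \<or> e = b" using e unfolding Nab by auto
          show "col e \<noteq> col f"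
          proof (cases "e = a")
            case True
            show ?thesis
            proof (rule ladj_at[OF l[unfolded True] x(1)])
              assume hh: "w \<in> ends f" "f \<noteq> a" then show ?thesis using atw[OF f hh(1)] hh(2) True ca dn by auto
            next
              assume hh: "x \<in> ends f" "f \<noteq> a" then show ?thesis using atx[OF f hh(1)] hh(2) True ca cga dn by auto
            qed
          next
            case False
            then have eb: "e = b" using eab by auto
            show ?thesis
            proof (rule ladj_at[OF l[unfolded eb] y(1)])
              assume hh: "w \<in> ends f" "f \<noteq> b" then show ?thesis using atw[OF f hh(1)] hh(2) eb ca dn by auto
            next
              assume hh: "y \<in> ends f" "f \<noteq> b" then show ?thesis using aty[OF f hh(1)] hh(2) eb ca cga dn by auto
            qed
          qed
        qed
        show "\<forall>e\<in>E - del E ends {w}. \<forall>f\<in>E. \<forall>g\<in>E. e \<noteq> f \<longrightarrow> col e = col f \<longrightarrow> 3 \<le> col e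
                  \<longrightarrow> ladj ends e g \<longrightarrow> ladj ends g f \<longrightarrow> False"
        proof (intro ballI impI)
          fix e f g assume e: "e \<in> E - del E ends {w}" and f: "f \<in> E" and g: "g \<in> E"
            and ef: "e \<noteq> f" and cef: "col e = col f" and c3: "3 \<le> col e"
            and l1: "ladj ends e g" and l2: "ladj ends g f"
          have ea: "e = a" using e c3 ca c unfolding Nab by auto
          have cf: "col f = d" using cef ea ca by auto
          have fa: "f \<noteq> a" using ef ea by auto
          have fnb: "f \<noteq> b" using cf ca dn by auto
          have gs: "g = b \<or> g = ga"
          proof (rule ladj_at[OF l1[unfolded ea] x(1)])
            assume hh: "w \<in> ends g" "g \<noteq> a" then show ?thesis using atw[OF g hh(1)] hh(2) by auto
          next
            assume hh: "x \<in> ends g" "g \<noteq> a" then show ?thesis using atx[OF g hh(1)] hh(2) by auto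
          qed
          then show False
          proof
            assume gb': "g = b"
            have l2': "ladj ends b f" using l2 gb' by simp
            show False
            proof (rule ladj_at[OF l2' y(1)])
              assume hh: "w \<in> ends f" "f \<noteq> b" then show False using atw[OF f hh(1)] hh(2) fa by auto
            next
              assume hh: "y \<in> ends f" "f \<noteq> b" then show False using aty[OF f hh(1)] hh(2) fa fnb cga cf dn by auto
            qed
          next
            assume gg: "g = ga"
            have l2': "ladj ends ga f" using l2 gg by simp
            show False
            proof (rule ladj_at[OF l2' x'(1)])
              assume hh: "x \<in> ends f" "f \<noteq> ga" then show False using atx[OF f hh(1)] hh(2) fa fnb by auto
            next
              assume hh: "x' \<in> ends f" "f \<noteq> ga" then show False using atx'[OF f hh(1)] fa fnb cf by auto
            qed
          qed
        qed
      qed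
      have "good E ends D col"
      proof (rule good_ext[OF fin gdc[unfolded E'_def] pr])
        show "\<forall>e\<in>E - del E ends {w}. ends e \<inter> D \<noteq> {} \<longrightarrow> col e \<le> 2"
        proof (intro ballI impI)
          fix e assume e: "e \<in> E - del E ends {w}" "ends e \<inter> D \<noteq> {}"
          then have "e = a \<or> e = b" unfolding Nab by auto
          then show "col e \<le> 2"
          proof
            assume ea: "e = a"
            have "x \<notin> D"
            proof
              assume "x \<in> D"
              then have "card (inc E ends x) \<le> 1" using dh unfolding dhyp_def by auto
              moreover have "{a, ga} \<subseteq> inc E ends x" "a \<noteq> ga" using aE x gaE abE' unfolding E'_def by auto
              ultimately show False using card_mono[OF finite_inc[OF fin], of "{a,ga}" ends x]
                by (metis card_2_iff le_trans not_less_eq_eq numeral_2_eq_2 One_nat_def)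
            qed
            moreover have "w \<notin> D"
            proof
              assume "w \<in> D"
              then have "card (inc E ends w) \<le> 1" using dh unfolding dhyp_def by auto
              then show False using c2 by simp
            qed
            ultimately show ?thesis using e(2) ea x(1) by auto
          next
            assume "e = b" then show ?thesis using ca c by auto
          qed
        qed
      qed (use nh3 in \<open>auto simp: D'_def\<close>)
      then show ?thesis by blast
    qed
  qed
qed

lemma new_single: "e \<in> E \<Longrightarrow> e \<notin> del E ends {u} \<Longrightarrow> e \<in> inc E ends u"
  by auto

lemma R1_extend:
  assumes wf: "wf E ends" and hu: "card (inc E ends u) = 3"
    and gd': "good (del E ends {u}) ends D' c'"
    and uD: "u \<notin> D" and DD: "D - {u} \<subseteq> D'"
    and wv: "\<And>a. a \<in> inc E ends u \<Longrightarrow> ends a = {u, wv a} \<and> wv a \<noteq> u"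
    and P1: "\<And>a. a \<in> inc E ends u \<Longrightarrow> \<sigma> a \<in> {1,2,3,4}"
    and P2: "\<And>a b. a \<in> inc E ends u \<Longrightarrow> b \<in> inc E ends u \<Longrightarrow> a \<noteq> b \<Longrightarrow> \<sigma> a \<noteq> \<sigma> b"
    and P3: "\<And>a g. a \<in> inc E ends u \<Longrightarrow> g \<in> inc (del E ends {u}) ends (wv a) \<Longrightarrow> c' g \<noteq> \<sigma> a"
    and P4: "\<And>a g z f. a \<in> inc E ends u \<Longrightarrow> 3 \<le> \<sigma> a \<Longrightarrow> g \<in> inc (del E ends {u}) ends (wv a) \<Longrightarrow>
               z \<in> ends g \<Longrightarrow> f \<in> inc (del E ends {u}) ends z \<Longrightarrow> c' f \<noteq> \<sigma> a"
    and P5: "\<And>a. a \<in> inc E ends u \<Longrightarrow> wv a \<in> D \<Longrightarrow> \<sigma> a \<le> 2"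
    and P6: "1 \<in> \<sigma> ` inc E ends u" "2 \<in> \<sigma> ` inc E ends u"
    and P7: "\<And>a b f. a \<in> inc E ends u \<Longrightarrow> b \<in> inc E ends u \<Longrightarrow> a \<noteq> b \<Longrightarrow> 3 \<le> \<sigma> a \<Longrightarrow>
               f \<in> inc (del E ends {u}) ends (wv b) \<Longrightarrow> c' f \<noteq> \<sigma> a"
  shows "good E ends D (\<lambda>e. if e \<in> del E ends {u} then c' e else \<sigma> e)"
proof -
  let ?E' = "del E ends {u}"
  let ?A = "inc E ends u"
  define col where "col = (\<lambda>e. if e \<in> ?E' then c' e else \<sigma> e)"
  have fin: "finite E" using wfD(1)[OF wf] .
  have two: "\<forall>e\<in>E. card (ends e) = 2" using wfD(2)[OF wf] by blast
  have Anew: "\<And>a. a \<in> ?A \<Longrightarrow> a \<notin> ?E'" by auto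
  have cA: "\<And>a. a \<in> ?A \<Longrightarrow> col a = \<sigma> a" using Anew unfolding col_def by auto
  have cO: "\<And>e. e \<in> ?E' \<Longrightarrow> col e = c' e" unfolding col_def by auto
  have NA: "E - ?E' = ?A" by auto
  have gdc: "good ?E' ends D' col" using good_cong[of ?E' col c'] gd' cO by blast
  have cls: "\<And>h. h \<in> E \<Longrightarrow> h \<notin> ?E' \<Longrightarrow> h \<in> ?A" by auto
  have Adiff: "\<And>a f. a \<in> ?A \<Longrightarrow> f \<in> ?A \<Longrightarrow> f \<noteq> a \<Longrightarrow> col f \<noteq> col a"
    using P2 cA by metis
  have pr: "proper E ends col"
  proof (rule proper_ext[OF two])
    show "proper ?E' ends col" by (rule goodD1[OF gdc])
    show "\<forall>e\<in>E - ?E'. col e \<in> {1,2,3,4}" unfolding NA using P1 cA by auto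
    show "\<forall>e\<in>E - ?E'. \<forall>f\<in>E. ladj ends e f \<longrightarrow> col e \<noteq> col f"
    proof (intro ballI impI)
      fix a f assume a: "a \<in> E - ?E'" and f: "f \<in> E" and l: "ladj ends a f"
      have aA: "a \<in> ?A" using a NA by auto
      show "col a \<noteq> col f"
      proof (rule ladj_at[OF l conjunct1[OF wv[OF aA]]])
        assume h: "u \<in> ends f" "f \<noteq> a"
        then have "f \<in> ?A" using f by simp
        then show ?thesis using Adiff[OF aA _ h(2)] by metis
      next
        assume h: "wv a \<in> ends f" "f \<noteq> a"
        show ?thesis
        proof (cases "f \<in> ?E'")
          case True
          then have "f \<in> inc ?E' ends (wv a)" using h by simp
          then show ?thesis using P3[OF aA] cA[OF aA] cO[OF True] by metis
        next
          case False
          then have "f \<in> ?A" using cls f by blast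
          then show ?thesis using Adiff[OF aA _ h(2)] by metis
        qed
      qed
    qed
    show "\<forall>e\<in>E - ?E'. \<forall>f\<in>E. \<forall>g\<in>E. e \<noteq> f \<longrightarrow> col e = col f \<longrightarrow> 3 \<le> col e
              \<longrightarrow> ladj ends e g \<longrightarrow> ladj ends g f \<longrightarrow> False"
    proof (intro ballI impI)
      fix a f g assume a: "a \<in> E - ?E'" and f: "f \<in> E" and g: "g \<in> E" and af: "a \<noteq> f"
        and cc: "col a = col f" and c3: "3 \<le> col a" and l1: "ladj ends a g" and l2: "ladj ends g f"
      have aA: "a \<in> ?A" using a NA by auto
      have s3: "3 \<le> \<sigma> a" using c3 cA[OF aA] by simp
      have fA: "f \<notin> ?A" using Adiff[OF aA _ ] af cc by metis
      then have fE': "f \<in> ?E'" using cls f by blast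
      have cf: "c' f = \<sigma> a" using cc cA[OF aA] cO[OF fE'] by simp
      show False
      proof (cases "g \<in> ?A")
        case True
        have ga: "g \<noteq> a" using l1 unfolding ladj_def by auto
        show False
        proof (rule ladj_at[OF l2 conjunct1[OF wv[OF True]]])
          assume "u \<in> ends f" "f \<noteq> g" then show False using fA f by simp
        next
          assume h: "wv g \<in> ends f" "f \<noteq> g"
          then have "f \<in> inc ?E' ends (wv g)" using fE' by simp
          then show False using P7[OF aA True ga[symmetric] s3] cf by metis
        qed
      next
        case False
        then have gE': "g \<in> ?E'" using cls g by blast
        have gw: "g \<in> inc ?E' ends (wv a)"
        proof (rule ladj_at[OF l1 conjunct1[OF wv[OF aA]]])
          assume "u \<in> ends g" "g \<noteq> a" then show ?thesis using gE' by simp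
        next
          assume "wv a \<in> ends g" "g \<noteq> a" then show ?thesis using gE' by simp
        qed
        obtain z where z: "z \<in> ends g" "z \<in> ends f" using l2 by (auto elim: ladjE)
        have "f \<in> inc ?E' ends z" using fE' z by simp
        then show False using P4[OF aA s3 gw z(1)] cf by metis
      qed
    qed
  qed
  have "good E ends D col"
  proof (rule good_ext[OF fin gdc pr])
    show "\<forall>v. card (inc E ends v) = 3 \<longrightarrow> \<not> inc E ends v \<subseteq> ?E' \<longrightarrow>
               1 \<in> col ` inc E ends v \<and> 2 \<in> col ` inc E ends v"
    proof (intro allI impI)
      fix v assume v3: "card (inc E ends v) = 3" and ns: "\<not> inc E ends v \<subseteq> ?E'"
      then obtain e where e: "e \<in> inc E ends v" "e \<notin> ?E'" by blast
      then have eA: "e \<in> ?A" by auto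
      show "1 \<in> col ` inc E ends v \<and> 2 \<in> col ` inc E ends v"
      proof (cases "v = u")
        case True
        have "col ` ?A = \<sigma> ` ?A" using cA by (auto intro: image_cong)
        then show ?thesis using P6 True by simp
      next
        case False
        have "u \<in> ends e" "v \<in> ends e" "e \<in> E" using e eA by auto
        then have False using high_high[OF wf, of e u v] False v3 hu by blast
        then show ?thesis by simp
      qed
    qed
    show "\<forall>e\<in>E - ?E'. ends e \<inter> D \<noteq> {} \<longrightarrow> col e \<le> 2"
    proof (intro ballI impI)
      fix a assume a: "a \<in> E - ?E'" "ends a \<inter> D \<noteq> {}"
      then have aA: "a \<in> ?A" using NA by auto
      then have "wv a \<in> D" using a(2) wv[OF aA] uD by auto
      then show "col a \<le> 2" using P5[OF aA] cA[OF aA] by simp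
    qed
    show "D - {u} \<subseteq> D'" by (rule DD)
  qed
  then show ?thesis unfolding col_def .
qed

lemma choose3:
  fixes f1 f2 f3 d1 d2 d3 :: nat
  assumes "f1 \<in> {0,1,2}" "f2 \<in> {0,1,2}" "f3 \<in> {0,1,2}" "d1 \<in> {3,4}" "d2 \<in> {3,4}" "d3 \<in> {3,4}"
   "x1 \<longrightarrow> f1 = 0" "x2 \<longrightarrow> f2 = 0" "x3 \<longrightarrow> f3 = 0" "\<not>(x1 \<and> x2 \<and> x3)"
   "\<not>(f1 \<noteq> 0 \<and> f1 = f2 \<and> f2 = f3)"
  shows "\<exists>s1\<in>{1,2,d1}. \<exists>s2\<in>{1,2,d2}. \<exists>s3\<in>{1,2,d3}. s1 \<noteq> f1 \<and> s2 \<noteq> f2 \<and> s3 \<noteq> f3 \<and>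
     (x1 \<longrightarrow> s1 \<le> 2) \<and> (x2 \<longrightarrow> s2 \<le> 2) \<and> (x3 \<longrightarrow> s3 \<le> 2) \<and>
     s1 \<noteq> s2 \<and> s1 \<noteq> s3 \<and> s2 \<noteq> s3 \<and> 1 \<in> {s1,s2,s3} \<and> 2 \<in> {s1,s2,s3}"
proof -
  have dd: "d1 \<noteq> f1" "d1 > 2" "d1 \<noteq> 1" "d1 \<noteq> 2" using assms(1,4) by auto
  have dd2: "d2 \<noteq> f2" "d2 > 2" "d2 \<noteq> 1" "d2 \<noteq> 2" using assms(2,5) by auto
  have dd3: "d3 \<noteq> f3" "d3 > 2" "d3 \<noteq> 1" "d3 \<noteq> 2" using assms(3,6) by auto
  show ?thesis
  proof (cases "\<not>x3 \<and> \<not>(f1 \<noteq> 0 \<and> f1 = f2)")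
    case True
    show ?thesis
      apply (rule pair_choice[OF assms(1,2)])
      using True apply simp
      subgoal apply (rule bexI[of _ 1], rule bexI[of _ 2], rule bexI[of _ d3]) using dd dd2 dd3 True by simp_all
      subgoal apply (rule bexI[of _ 2], rule bexI[of _ 1], rule bexI[of _ d3]) using dd dd2 dd3 True by simp_all
      done
  next
    case F3: False
    show ?thesis
    proof (cases "\<not>x2 \<and> \<not>(f1 \<noteq> 0 \<and> f1 = f3)")
      case True
      show ?thesis
        apply (rule pair_choice[OF assms(1,3)])
        using True apply simp
        subgoal apply (rule bexI[of _ 1], rule bexI[of _ d2], rule bexI[of _ 2]) using dd dd2 dd3 True by simp_all
        subgoal apply (rule bexI[of _ 2], rule bexI[of _ d2], rule bexI[of _ 1]) using dd dd2 dd3 True by simp_all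
        done
    next
      case F2: False
      have T: "\<not>x1 \<and> \<not>(f2 \<noteq> 0 \<and> f2 = f3)" using F2 F3 assms(7-11) by blast
      show ?thesis
        apply (rule pair_choice[OF assms(2,3)])
        using T apply simp
        subgoal apply (rule bexI[of _ d1], rule bexI[of _ 1], rule bexI[of _ 2]) using dd dd2 dd3 T by simp_all
        subgoal apply (rule bexI[of _ d1], rule bexI[of _ 2], rule bexI[of _ 1]) using dd dd2 dd3 T by simp_all
        done
    qed
  qed
qed

definition wv :: "('e \<Rightarrow> 'v set) \<Rightarrow> 'v \<Rightarrow> 'e \<Rightarrow> 'v" where
  "wv ends u a = the_elem (ends a - {u})"

lemma wv_prop:
  assumes "wf E ends" "a \<in> inc E ends u"
  shows "ends a = {u, wv ends u a}" "wv ends u a \<noteq> u"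
proof -
  have aE: "a \<in> E" "u \<in> ends a" using assms(2) by auto
  obtain x where x: "ends a = {u, x}" "x \<noteq> u" using other_end[OF assms(1) aE] by blast
  have "ends a - {u} = {x}" using x by auto
  then have "wv ends u a = x" unfolding wv_def by simp
  then show "ends a = {u, wv ends u a}" "wv ends u a \<noteq> u" using x by auto
qed

lemma blockfree:
  assumes gd: "good E ends D c" and wf: "wf E ends" and c1: "card (inc E ends w) \<le> 1"
    and cc: "\<forall>g\<in>inc E ends w. c g \<in> {1,2}"
  shows "\<exists>d\<in>{3,4}. \<forall>g\<in>inc E ends w. \<forall>z\<in>ends g. \<forall>f\<in>inc E ends z. c f \<noteq> d"
proof -
  have fin: "finite E" using wfD(1)[OF wf] .
  show ?thesis
  proof (rule card_le1_cases[OF c1 finite_inc[OF fin]])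
    assume "inc E ends w = {}" then show ?thesis by auto
  next
    fix g assume ig: "inc E ends w = {g}"
    then have gE: "g \<in> E" "w \<in> ends g" by auto
    obtain z0 where z0: "ends g = {w, z0}" "z0 \<noteq> w" using other_end[OF wf gE] by blast
    let ?X = "inc E ends z0"
    have "\<exists>d\<in>{3,4}. d \<notin> c ` ?X"
    proof (rule L_free)
      show "finite ?X" by (rule finite_inc[OF fin])
      show "card ?X \<le> 3" using wfD(3)[OF wf] by blast
      show "card ?X = 3 \<longrightarrow> 1 \<in> c ` ?X \<and> 2 \<in> c ` ?X" using goodD2[OF gd] goodD3[OF gd] by blast
      show "g \<in> ?X" using gE z0 by simp
      show "c g \<in> {1,2}" using cc ig by simp
    qed
    then obtain d where d: "d \<in> {3,4}" "d \<notin> c ` ?X" by blast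
    have "\<forall>g'\<in>inc E ends w. \<forall>z\<in>ends g'. \<forall>f\<in>inc E ends z. c f \<noteq> d"
    proof (intro ballI)
      fix g' z f assume g': "g' \<in> inc E ends w" and z: "z \<in> ends g'" and f: "f \<in> inc E ends z"
      have gg: "g' = g" using g' ig by simp
      show "c f \<noteq> d"
      proof (cases "z = w")
        case True
        then have "f = g" using f ig by auto
        then show ?thesis using cc ig d(1) by auto
      next
        case False
        then have "z = z0" using z gg z0 by auto
        then show ?thesis using f d(2) by auto
      qed
    qed
    then show ?thesis using d(1) by blast
  qed
qed

lemma R1_kempe:
  assumes wf: "wf E ends" and gd: "good E ends D c0"
    and w: "w1 \<in> D" "w2 \<in> D" "w3 \<in> D"
    and c1: "card (inc E ends w1) \<le> 1" "card (inc E ends w2) \<le> 1" "card (inc E ends w3) \<le> 1"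
    and dist: "inc E ends w1 \<noteq> {} \<Longrightarrow> inc E ends w2 \<noteq> {} \<Longrightarrow> inc E ends w3 \<noteq> {} \<Longrightarrow>
               w1 \<noteq> w2 \<and> w1 \<noteq> w3 \<and> w2 \<noteq> w3"
  shows "\<exists>c. good E ends D c \<and>
     \<not> (fcol c (inc E ends w1) \<noteq> 0 \<and> fcol c (inc E ends w1) = fcol c (inc E ends w2)
        \<and> fcol c (inc E ends w2) = fcol c (inc E ends w3))"
proof -
  have fin: "finite E" using wfD(1)[OF wf] .
  have two: "\<forall>e\<in>E. card (ends e) = 2" using wfD(2)[OF wf] by blast
  have cD: "\<forall>g\<in>inc E ends p. c g \<in> {1,2}" if gc: "good E ends D c" and p: "p \<in> D" for c p
  proof (intro ballI)
    fix g assume g: "g \<in> inc E ends p"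
    then have "c g \<le> 2" "c g \<in> {1,2,3,4}" using goodD4[OF gc] properD1[OF goodD1[OF gc]] p by auto
    then show "c g \<in> {1,2}" by auto
  qed
  have fp: "\<And>c p g. good E ends D c \<Longrightarrow> p \<in> D \<Longrightarrow> card (inc E ends p) \<le> 1 \<Longrightarrow> inc E ends p = {g} \<Longrightarrow>
      fcol c (inc E ends p) = c g"
  proof -
    fix c p g assume a: "good E ends D c" "p \<in> D" "card (inc E ends p) \<le> 1" "inc E ends p = {g}"
    have "c g = fcol c (inc E ends p)"
      by (rule fcol_props(2)[OF a(3) finite_inc[OF fin] cD[OF a(1,2)]]) (use a(4) in simp)
    then show "fcol c (inc E ends p) = c g" by simp
  qed
  show ?thesis
  proof (cases "fcol c0 (inc E ends w1) \<noteq> 0 \<and> fcol c0 (inc E ends w1) = fcol c0 (inc E ends w2)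
        \<and> fcol c0 (inc E ends w2) = fcol c0 (inc E ends w3)")
    case False then show ?thesis using gd by blast
  next
    case True
    have ne: "inc E ends w1 \<noteq> {}" "inc E ends w2 \<noteq> {}" "inc E ends w3 \<noteq> {}"
      using True unfolding fcol_def by (auto split: if_splits)
    obtain g1 where g1: "inc E ends w1 = {g1}" using card_le1_cases[OF c1(1) finite_inc[OF fin]] ne(1) by blast
    obtain g2 where g2: "inc E ends w2 = {g2}" using card_le1_cases[OF c1(2) finite_inc[OF fin]] ne(2) by blast
    obtain g3 where g3: "inc E ends w3 = {g3}" using card_le1_cases[OF c1(3) finite_inc[OF fin]] ne(3) by blast
    have gE: "g1 \<in> E" "g2 \<in> E" "g3 \<in> E" "w1 \<in> ends g1" "w2 \<in> ends g2" "w3 \<in> ends g3"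
      using g1 g2 g3 by auto
    have cg: "c0 g1 = c0 g2" "c0 g2 = c0 g3" "c0 g1 \<in> {1,2}"
      using True fp[OF gd w(1) c1(1) g1] fp[OF gd w(2) c1(2) g2] fp[OF gd w(3) c1(3) g3]
        cD[OF gd w(1)] g1 by auto
    have dw: "w1 \<noteq> w2" "w1 \<noteq> w3" "w2 \<noteq> w3" using dist ne by auto
    let ?K = "kcomp E ends c0 g1"
    let ?c = "kswap E ends c0 g1"
    have gc: "good E ends D ?c" using kswap_good[OF gd gE(1) cg(3)] .
    have Kmem: "\<And>f. f \<in> ?K \<Longrightarrow> f \<in> E" using kcomp_mem[of g1 E c0, OF gE(1) cg(3)] by blast
    have nb: "\<not> (g2 \<in> ?K \<and> g3 \<in> ?K)"
    proof
      assume both: "g2 \<in> ?K \<and> g3 \<in> ?K"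
      have incK: "inc ?K ends w = {g}" if "inc E ends w = {g}" "g \<in> ?K" for w g
      proof
        show "inc ?K ends w \<subseteq> {g}" using that(1) Kmem by auto
        show "{g} \<subseteq> inc ?K ends w" using that by auto
      qed
      have k1: "card (inc ?K ends w1) = 1" using incK[OF g1 kcomp_self] by simp
      have k2: "card (inc ?K ends w2) = 1" using incK[OF g2] both by simp
      have k3: "card (inc ?K ends w3) = 1" using incK[OF g3] both by simp
      show False
      proof (rule lemK[OF _ _ _ _ dw k1 k2 k3])
        show "finite ?K" using Kmem fin by (meson finite_subset subsetI)
        show "\<forall>e\<in>?K. card (ends e) = 2" using Kmem two by blast
        show "\<forall>v. card (inc ?K ends v) \<le> 2"
          using kcomp_deg[OF goodD1[OF gd] gE(1) cg(3) fin] by blast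
        show "conn ?K ends" by (rule kcomp_conn[where g=g1 and E=E and col=c0 and ends=ends, OF gE(1) cg(3)])
      qed
    qed
    have s1: "fcol ?c (inc E ends w1) = 3 - c0 g1"
      using fp[OF gc w(1) c1(1) g1] kcomp_self[of g1 E ends c0] unfolding kswap_def by simp
    have cne: "3 - c0 g1 \<noteq> c0 g1" using cg(3) by auto
    show ?thesis
    proof (cases "g2 \<in> ?K")
      case False
      have "fcol ?c (inc E ends w2) = c0 g1"
        using fp[OF gc w(2) c1(2) g2] False cg unfolding kswap_def by simp
      then show ?thesis using gc s1 cne by metis
    next
      case True
      then have "g3 \<notin> ?K" using nb by blast
      then have "fcol ?c (inc E ends w3) = c0 g1"
        using fp[OF gc w(3) c1(3) g3] cg unfolding kswap_def by simp
      then show ?thesis using gc s1 cne by metis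
    qed
  qed
qed

lemma low_nbr:
  assumes wf: "wf E ends" and hu: "card (inc E ends u) = 3" and x: "x \<in> nbr E ends u"
  shows "card (inc E ends x) \<le> 2"
proof -
  obtain e where e: "e \<in> E" "u \<in> ends e" "x \<in> ends e" "x \<noteq> u" using x unfolding nbr_iff by auto
  have "card (inc E ends x) \<noteq> 3" using high_high[OF wf e(1,2,3) e(4)[symmetric] hu] by blast
  then show ?thesis using wfD(3)[OF wf, of x] by linarith
qed

lemma dhyp_del_high:
  assumes wf: "wf E ends" and dh: "dhyp E ends D" and hu: "card (inc E ends u) = 3"
    and safe: "\<forall>v. card (inc E ends v) = 3 \<longrightarrow> v \<noteq> u \<longrightarrow>
        card {e\<in>inc E ends v. ends e \<inter> (D \<union> nbr E ends u) \<noteq> {}} \<le> 2"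
  shows "dhyp (del E ends {u}) ends (D \<union> nbr E ends u)"
  unfolding dhyp_def
proof (intro conjI allI impI)
  have low: "\<forall>x\<in>nbr E ends u. card (inc E ends x) \<le> 2" using low_nbr[OF wf hu] by blast
  show "\<forall>p\<in>D \<union> nbr E ends u. card (inc (del E ends {u}) ends p) \<le> 1"
    by (rule dhyp_del_nbr[OF wf dh low])
next
  fix v assume v: "card (inc (del E ends {u}) ends v) = 3"
  have fin: "finite E" using wfD(1)[OF wf] .
  have le: "card (inc (del E ends {u}) ends v) \<le> card (inc E ends v)" by (rule card_inc_del_le[OF fin])
  have v3: "card (inc E ends v) = 3" using le v wfD(3)[OF wf, of v] by linarith
  have eq: "inc (del E ends {u}) ends v = inc E ends v"
    by (rule card_subset_eq[OF finite_inc[OF fin] inc_del_sub]) (use v v3 in simp)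
  have vu: "v \<noteq> u"
  proof
    assume "v = u"
    then have "inc (del E ends {u}) ends v = {}" by auto
    then show False using v by simp
  qed
  show "dcnt (del E ends {u}) ends (D \<union> nbr E ends u) v \<le> 2"
    unfolding dcnt_def eq using safe v3 vu by blast
qed

lemma red_R1:
  assumes wf: "wf E ends" and dh: "dhyp E ends D"
    and hu: "card (inc E ends u) = 3"
    and safe: "\<forall>v. card (inc E ends v) = 3 \<longrightarrow> v \<noteq> u \<longrightarrow>
        card {e\<in>inc E ends v. ends e \<inter> (D \<union> nbr E ends u) \<noteq> {}} \<le> 2"
    and IH: "\<And>E' D'. card E' < card E \<Longrightarrow> wf E' ends \<Longrightarrow> dhyp E' ends D' \<Longrightarrow> \<exists>col. good E' ends D' col"
  shows "\<exists>col. good E ends D col"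
proof -
  have fin: "finite E" using wfD(1)[OF wf] .
  define E' where "E' = del E ends {u}"
  define D' where "D' = D \<union> nbr E ends u"
  define w where "w = wv ends u"
  have wf': "wf E' ends" unfolding E'_def by (rule wf_del[OF wf])
  have finE': "finite E'" using wfD(1)[OF wf'] .
  have dh': "dhyp E' ends D'" unfolding E'_def D'_def by (rule dhyp_del_high[OF wf dh hu safe])
  obtain a1 a2 a3 where A: "inc E ends u = {a1,a2,a3}" "a1 \<noteq> a2" "a2 \<noteq> a3" "a1 \<noteq> a3"
    using hu card_3_iff by metis
  have aA: "a1 \<in> inc E ends u" "a2 \<in> inc E ends u" "a3 \<in> inc E ends u" using A by auto
  have lt: "card E' < card E"
    by (rule psubset_card_mono[OF fin]) (use aA in \<open>auto simp: E'_def\<close>)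
  obtain c0 where gd0: "good E' ends D' c0" using IH[OF lt wf' dh'] by blast
  have wp: "ends a = {u, w a}" "w a \<noteq> u" "w a \<in> nbr E ends u" "card (inc E ends (w a)) \<le> 2"
    "a \<in> inc E ends (w a)" "a \<notin> E'" "w a \<in> D'" "card (inc E' ends (w a)) \<le> 1"
    if a: "a \<in> inc E ends u" for a
  proof -
    show e: "ends a = {u, w a}" "w a \<noteq> u" using wv_prop[OF wf a] unfolding w_def by auto
    then show n: "w a \<in> nbr E ends u" using a unfolding nbr_iff by auto
    show "card (inc E ends (w a)) \<le> 2" by (rule low_nbr[OF wf hu n])
    show "a \<in> inc E ends (w a)" using a e by auto
    show "a \<notin> E'" using a unfolding E'_def by auto
    show "w a \<in> D'" using n unfolding D'_def by auto
    then show "card (inc E' ends (w a)) \<le> 1" using dh' unfolding dhyp_def by auto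
  qed
  have same: "inc E' ends (w a) = {}" if "a \<in> inc E ends u" "b \<in> inc E ends u" "a \<noteq> b" "w a = w b" for a b
  proof -
    have "inc E ends (w a) = {a, b}"
      by (rule card_le2_two[OF wp(4)[OF that(1)] finite_inc[OF fin] wp(5)[OF that(1)]])
        (use wp(5)[OF that(2)] that(3,4) in auto)
    then show ?thesis using wp(6)[OF that(1)] wp(6)[OF that(2)] unfolding E'_def by auto
  qed
  have dist: "w a1 \<noteq> w a2 \<and> w a1 \<noteq> w a3 \<and> w a2 \<noteq> w a3"
    if "inc E' ends (w a1) \<noteq> {}" "inc E' ends (w a2) \<noteq> {}" "inc E' ends (w a3) \<noteq> {}"
    using same[OF aA(1) aA(2) A(2)] same[OF aA(1) aA(3) A(4)] same[OF aA(2) aA(3) A(3)] that by auto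
  obtain c' where gd': "good E' ends D' c'" and neq:
    "\<not> (fcol c' (inc E' ends (w a1)) \<noteq> 0 \<and> fcol c' (inc E' ends (w a1)) = fcol c' (inc E' ends (w a2))
        \<and> fcol c' (inc E' ends (w a2)) = fcol c' (inc E' ends (w a3)))"
    using R1_kempe[OF wf' gd0 wp(7)[OF aA(1)] wp(7)[OF aA(2)] wp(7)[OF aA(3)]
        wp(8)[OF aA(1)] wp(8)[OF aA(2)] wp(8)[OF aA(3)] dist] by blast
  define F where "F a = fcol c' (inc E' ends (w a))" for a
  have cD': "\<forall>g\<in>inc E' ends (w a). c' g \<in> {1,2}" if a: "a \<in> inc E ends u" for a
  proof
    fix g assume g: "g \<in> inc E' ends (w a)"
    then have "c' g \<le> 2" "c' g \<in> {1,2,3,4}" using goodD4[OF gd'] properD1[OF goodD1[OF gd']] wp(7)[OF a]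
      by auto
    then show "c' g \<in> {1,2}" by auto
  qed
  have Fp: "F a \<in> {0,1,2}" "\<And>g. g \<in> inc E' ends (w a) \<Longrightarrow> c' g = F a"
    "w a \<in> D \<Longrightarrow> F a = 0" if a: "a \<in> inc E ends u" for a
  proof -
    note fp = fcol_props[OF wp(8)[OF a] finite_inc[OF finE'] cD'[OF a]]
    show "F a \<in> {0,1,2}" using fp(1) unfolding F_def .
    show "\<And>g. g \<in> inc E' ends (w a) \<Longrightarrow> c' g = F a" using fp(2) unfolding F_def by blast
    assume wD: "w a \<in> D"
    then have c1: "card (inc E ends (w a)) \<le> 1" using dh unfolding dhyp_def by auto
    have "inc E ends (w a) = {a}"
    proof (rule card_le1_cases[OF c1 finite_inc[OF fin]])
      assume "inc E ends (w a) = {}" then show ?thesis using wp(5)[OF a] by simp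
    next
      fix g assume "inc E ends (w a) = {g}" then show ?thesis using wp(5)[OF a] by simp
    qed
    then have "inc E' ends (w a) = {}" using wp(6)[OF a] unfolding E'_def by auto
    then show "F a = 0" using fp(3) unfolding F_def by blast
  qed
  define BP where "BP a d = (\<forall>g\<in>inc E' ends (w a). \<forall>z\<in>ends g. \<forall>f\<in>inc E' ends z. c' f \<noteq> d)" for a d
  have bp: "\<exists>d\<in>{3,4}. BP a d" if a: "a \<in> inc E ends u" for a
    using blockfree[OF gd' wf' wp(8)[OF a] cD'[OF a]] unfolding BP_def .
  obtain d1 where d1: "d1 \<in> {3,4}" "BP a1 d1" using bp[OF aA(1)] by blast
  obtain d2 where d2: "d2 \<in> {3,4}" "BP a2 d2" using bp[OF aA(2)] by blast
  obtain d3 where d3: "d3 \<in> {3,4}" "BP a3 d3" using bp[OF aA(3)] by blast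
  have nall: "\<not> (w a1 \<in> D \<and> w a2 \<in> D \<and> w a3 \<in> D)"
  proof
    assume all: "w a1 \<in> D \<and> w a2 \<in> D \<and> w a3 \<in> D"
    have "{e\<in>inc E ends u. ends e \<inter> D \<noteq> {}} = inc E ends u"
    proof
      show "inc E ends u \<subseteq> {e\<in>inc E ends u. ends e \<inter> D \<noteq> {}}"
      proof
        fix e assume e: "e \<in> inc E ends u"
        then have "e = a1 \<or> e = a2 \<or> e = a3" using A(1) by auto
        then have "w e \<in> D" using all by auto
        then show "e \<in> {e\<in>inc E ends u. ends e \<inter> D \<noteq> {}}" using e wp(1)[OF e] by auto
      qed
    qed auto
    then have "dcnt E ends D u = 3" unfolding dcnt_def using hu by simp
    then show False using dh hu unfolding dhyp_def by auto
  qed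
  have Fx: "w a1 \<in> D \<longrightarrow> F a1 = 0" "w a2 \<in> D \<longrightarrow> F a2 = 0" "w a3 \<in> D \<longrightarrow> F a3 = 0"
    using Fp(3) aA by auto
  have neq': "\<not> (F a1 \<noteq> 0 \<and> F a1 = F a2 \<and> F a2 = F a3)" using neq unfolding F_def .
  obtain s1 s2 s3 where s: "s1\<in>{1,2,d1}" "s2\<in>{1,2,d2}" "s3\<in>{1,2,d3}"
    "s1 \<noteq> F a1" "s2 \<noteq> F a2" "s3 \<noteq> F a3"
    "w a1 \<in> D \<longrightarrow> s1 \<le> 2" "w a2 \<in> D \<longrightarrow> s2 \<le> 2" "w a3 \<in> D \<longrightarrow> s3 \<le> 2"
    "s1 \<noteq> s2" "s1 \<noteq> s3" "s2 \<noteq> s3" "1 \<in> {s1,s2,s3}" "2 \<in> {s1,s2,s3}"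
    using choose3[OF Fp(1)[OF aA(1)] Fp(1)[OF aA(2)] Fp(1)[OF aA(3)] d1(1) d2(1) d3(1) Fx nall neq']
    by blast
  define \<sigma> where "\<sigma> e = (if e = a1 then s1 else if e = a2 then s2 else s3)" for e
  define dd where "dd e = (if e = a1 then d1 else if e = a2 then d2 else d3)" for e
  have sa: "\<sigma> a1 = s1" "\<sigma> a2 = s2" "\<sigma> a3 = s3" "dd a1 = d1" "dd a2 = d2" "dd a3 = d3"
    using A unfolding \<sigma>_def dd_def by auto
  have gen: "\<sigma> a \<in> {1,2,dd a} \<and> \<sigma> a \<noteq> F a \<and> (w a \<in> D \<longrightarrow> \<sigma> a \<le> 2) \<and> dd a \<in> {3,4} \<and> BP a (dd a)"
    if a: "a \<in> inc E ends u" for a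
  proof -
    have "a = a1 \<or> a = a2 \<or> a = a3" using a A(1) by auto
    then show ?thesis
    proof (elim disjE)
      assume h: "a = a1" show ?thesis unfolding h sa(1,4) using s(1,4,7) d1 by blast
    next
      assume h: "a = a2" show ?thesis unfolding h sa(2,5) using s(2,5,8) d2 by blast
    next
      assume h: "a = a3" show ?thesis unfolding h sa(3,6) using s(3,6,9) d3 by blast
    qed
  qed
  have img: "\<sigma> ` inc E ends u = {s1, s2, s3}" using A(1) sa by auto
  have good: "good E ends D (\<lambda>e. if e \<in> del E ends {u} then c' e else \<sigma> e)"
  proof (rule R1_extend[OF wf hu gd'[unfolded E'_def]])
    show "u \<notin> D" using dh hu unfolding dhyp_def by auto
    show "D - {u} \<subseteq> D'" unfolding D'_def by auto
    show "\<And>a. a \<in> inc E ends u \<Longrightarrow> ends a = {u, w a} \<and> w a \<noteq> u" using wp(1,2) by blast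
    show "\<And>a. a \<in> inc E ends u \<Longrightarrow> \<sigma> a \<in> {1,2,3,4}" using gen by fastforce
    show "\<And>a b. a \<in> inc E ends u \<Longrightarrow> b \<in> inc E ends u \<Longrightarrow> a \<noteq> b \<Longrightarrow> \<sigma> a \<noteq> \<sigma> b"
      using A(1) sa s(10-12) by auto
    show "\<And>a g. a \<in> inc E ends u \<Longrightarrow> g \<in> inc (del E ends {u}) ends (w a) \<Longrightarrow> c' g \<noteq> \<sigma> a"
      using gen Fp(2) unfolding E'_def by metis
    show "\<And>a g z f. a \<in> inc E ends u \<Longrightarrow> 3 \<le> \<sigma> a \<Longrightarrow> g \<in> inc (del E ends {u}) ends (w a) \<Longrightarrow>
               z \<in> ends g \<Longrightarrow> f \<in> inc (del E ends {u}) ends z \<Longrightarrow> c' f \<noteq> \<sigma> a"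
    proof -
      fix a g z f assume h: "a \<in> inc E ends u" "3 \<le> \<sigma> a" "g \<in> inc (del E ends {u}) ends (w a)"
        "z \<in> ends g" "f \<in> inc (del E ends {u}) ends z"
      have "\<sigma> a = dd a" "BP a (dd a)" using gen[OF h(1)] h(2) by auto
      then show "c' f \<noteq> \<sigma> a" using h(3-5) unfolding BP_def E'_def by auto
    qed
    show "\<And>a. a \<in> inc E ends u \<Longrightarrow> w a \<in> D \<Longrightarrow> \<sigma> a \<le> 2" using gen by blast
    show "1 \<in> \<sigma> ` inc E ends u" "2 \<in> \<sigma> ` inc E ends u" unfolding img using s(13,14) by auto
    show "\<And>a b f. a \<in> inc E ends u \<Longrightarrow> b \<in> inc E ends u \<Longrightarrow> a \<noteq> b \<Longrightarrow> 3 \<le> \<sigma> a \<Longrightarrow>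
               f \<in> inc (del E ends {u}) ends (w b) \<Longrightarrow> c' f \<noteq> \<sigma> a"
    proof -
      fix a b f assume h: "a \<in> inc E ends u" "b \<in> inc E ends u" "a \<noteq> b" "3 \<le> \<sigma> a"
        "f \<in> inc (del E ends {u}) ends (w b)"
      have "c' f \<in> {1,2}" using cD'[OF h(2)] h(5) unfolding E'_def by blast
      then show "c' f \<noteq> \<sigma> a" using h(4) by auto
    qed
  qed
  then show ?thesis by blast
qed

lemma wD_empty:
  assumes wf: "wf E ends" and dh: "dhyp E ends D" and a: "a \<in> inc E ends x" and xD: "x \<in> D"
  shows "inc (del E ends {u}) ends x \<subseteq> {a}"
proof -
  have fin: "finite E" using wfD(1)[OF wf] .
  have c1: "card (inc E ends x) \<le> 1" using dh xD unfolding dhyp_def by auto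
  have "inc E ends x = {a}"
  proof (rule card_le1_cases[OF c1 finite_inc[OF fin]])
    assume "inc E ends x = {}" then show ?thesis using a by simp
  next
    fix g assume h: "inc E ends x = {g}"
    have "a = g" using a h by (metis singletonD)
    then show ?thesis using h by simp
  qed
  then show ?thesis using inc_del_sub[of E ends "{u}" x] by simp
qed

lemma red_C1:
  assumes wf: "wf E ends" and dh: "dhyp E ends D"
    and hu: "card (inc E ends u) = 3" and dc: "dcnt E ends D u = 2"
    and IH: "\<And>E' D'. card E' < card E \<Longrightarrow> wf E' ends \<Longrightarrow> dhyp E' ends D' \<Longrightarrow> \<exists>col. good E' ends D' col"
  shows "\<exists>col. good E ends D col"
proof -
  have fin: "finite E" using wfD(1)[OF wf] .
  define E' where "E' = del E ends {u}"
  define w where "w = wv ends u"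
  have wf': "wf E' ends" unfolding E'_def by (rule wf_del[OF wf])
  have finE': "finite E'" using wfD(1)[OF wf'] .
  have uD: "u \<notin> D" using dh hu unfolding dhyp_def by auto
  let ?T = "{e\<in>inc E ends u. ends e \<inter> D \<noteq> {}}"
  have cT: "card ?T = 2" using dc unfolding dcnt_def .
  have Tsub: "?T \<subseteq> inc E ends u" by auto
  obtain e3 where e3: "e3 \<in> inc E ends u" "e3 \<notin> ?T"
  proof -
    have "?T \<noteq> inc E ends u" using cT hu by auto
    then show ?thesis using that Tsub by blast
  qed
  have T: "?T = inc E ends u - {e3}"
  proof (rule card_subset_eq)
    show "finite (inc E ends u - {e3})" using finite_inc[OF fin] by auto
    show "?T \<subseteq> inc E ends u - {e3}" using e3 by auto
    show "card ?T = card (inc E ends u - {e3})" using cT hu e3(1) finite_inc[OF fin] by simp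
  qed
  obtain b1 b2 where B: "inc E ends u - {e3} = {b1, b2}" "b1 \<noteq> b2"
  proof -
    have "card (inc E ends u - {e3}) = 2" using cT T by simp
    then obtain x y where "inc E ends u - {e3} = {x,y}" "x \<noteq> y" unfolding card_2_iff by blast
    then show ?thesis by (rule that)
  qed
  have bA0: "b1 \<in> inc E ends u - {e3}" "b2 \<in> inc E ends u - {e3}" unfolding B(1) by simp_all
  have bA: "b1 \<in> inc E ends u" "b2 \<in> inc E ends u" "b1 \<noteq> e3" "b2 \<noteq> e3" using bA0 by simp_all
  have wp: "ends a = {u, w a}" "w a \<noteq> u" "w a \<in> nbr E ends u" "a \<in> inc E ends (w a)" "a \<notin> E'"
    if a: "a \<in> inc E ends u" for a
  proof -
    show e: "ends a = {u, w a}" "w a \<noteq> u" using wv_prop[OF wf a] unfolding w_def by auto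
    then show n: "w a \<in> nbr E ends u" using a unfolding nbr_iff by auto
    show "a \<in> inc E ends (w a)" using a e by auto
    show "a \<notin> E'" using a unfolding E'_def by auto
  qed
  have bD: "w b \<in> D" if "b \<in> inc E ends u" "b \<noteq> e3" for b
  proof -
    have "b \<in> inc E ends u - {e3}" using that by simp
    then have "b \<in> ?T" unfolding T .
    then show ?thesis using wp(1)[OF that(1)] uD by auto
  qed
  have bempty: "inc E' ends (w b) = {}" if "b \<in> inc E ends u" "b \<noteq> e3" for b
  proof -
    have "inc E' ends (w b) \<subseteq> {b}" unfolding E'_def by (rule wD_empty[OF wf dh wp(4)[OF that(1)] bD[OF that]])
    then show ?thesis using wp(5)[OF that(1)] by auto
  qed
  define q where "q = w e3"
  have qD: "q \<notin> D" using e3 wp(1)[OF e3(1)] uD unfolding q_def by auto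
  have low: "\<forall>x\<in>nbr E ends u. card (inc E ends x) \<le> 2" using low_nbr[OF wf hu] by blast
  have qc: "card (inc E' ends q) \<le> 1"
    using dhyp_del_nbr[OF wf dh low] wp(3)[OF e3(1)] unfolding E'_def q_def by blast
  define desig where "desig = (\<forall>h\<in>inc E' ends q. \<forall>r\<in>ends h. card (inc E ends r) \<noteq> 3)"
  define D' where "D' = D \<union> (if desig then {q} else {})"
  have dh': "dhyp E' ends D'"
    unfolding dhyp_def
  proof (intro conjI allI impI ballI)
    fix p assume p: "p \<in> D'"
    show "card (inc E' ends p) \<le> 1"
    proof (cases "p \<in> D")
      case True
      then show ?thesis using dh card_inc_del_le[OF fin, of ends "{u}" p] unfolding dhyp_def E'_def by force
    next
      case False then have "p = q" using p unfolding D'_def by (auto split: if_splits)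
      then show ?thesis using qc by simp
    qed
  next
    fix v assume v: "card (inc E' ends v) = 3"
    have le: "card (inc E' ends v) \<le> card (inc E ends v)" unfolding E'_def by (rule card_inc_del_le[OF fin])
    have v3: "card (inc E ends v) = 3" using le v wfD(3)[OF wf, of v] by linarith
    have eq: "inc E' ends v = inc E ends v" unfolding E'_def
      by (rule card_subset_eq[OF finite_inc[OF fin] inc_del_sub]) (use v v3 in \<open>simp add: E'_def\<close>)
    have sub: "{e\<in>inc E' ends v. ends e \<inter> D' \<noteq> {}} \<subseteq> {e\<in>inc E ends v. ends e \<inter> D \<noteq> {}}"
    proof
      fix e assume e: "e \<in> {e\<in>inc E' ends v. ends e \<inter> D' \<noteq> {}}"
      show "e \<in> {e\<in>inc E ends v. ends e \<inter> D \<noteq> {}}"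
      proof (cases "ends e \<inter> D \<noteq> {}")
        case True then show ?thesis using e eq by auto
      next
        case False
        then have "desig" "q \<in> ends e" using e unfolding D'_def by (auto split: if_splits)
        moreover have "e \<in> inc E' ends q" using e \<open>q \<in> ends e\<close> by auto
        moreover have "v \<in> ends e" using e by auto
        ultimately show ?thesis using v3 unfolding desig_def by blast
      qed
    qed
    have "card {e\<in>inc E' ends v. ends e \<inter> D' \<noteq> {}} \<le> dcnt E ends D v"
      unfolding dcnt_def by (rule card_mono[OF _ sub]) (use fin in simp)
    then show "dcnt E' ends D' v \<le> 2" using dh v3 unfolding dhyp_def dcnt_def by fastforce
  qed
  have lt: "card E' < card E"
    by (rule psubset_card_mono[OF fin]) (use e3 in \<open>auto simp: E'_def\<close>)
  obtain c' where gd': "good E' ends D' c'" using IH[OF lt wf' dh'] by blast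
  define BP where "BP d = (\<forall>g\<in>inc E' ends q. \<forall>z\<in>ends g. \<forall>f\<in>inc E' ends z. c' f \<noteq> d)" for d
  obtain d where d: "d \<in> {3,4}" "BP d"
  proof -
    have "\<exists>d\<in>{3,4}. BP d"
    proof (rule card_le1_cases[OF qc finite_inc[OF finE']])
      assume "inc E' ends q = {}" then show ?thesis unfolding BP_def by auto
    next
      fix h assume ih: "inc E' ends q = {h}"
      then have hE: "h \<in> E'" "q \<in> ends h" by auto
      obtain r where r: "ends h = {q, r}" "r \<noteq> q" using other_end[OF wf' hE] by blast
      let ?X = "inc E' ends r"
      have e0: "\<exists>e0\<in>?X. c' e0 \<in> {1,2}"
      proof (cases desig)
        case True
        then have "q \<in> D'" unfolding D'_def by auto
        then have "c' h \<le> 2" "c' h \<in> {1,2,3,4}" using goodD4[OF gd'] properD1[OF goodD1[OF gd']] hE by auto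
        then show ?thesis using hE r by (intro bexI[of _ h]) auto
      next
        case False
        then obtain r' where r': "r' \<in> ends h" "card (inc E ends r') = 3" using ih unfolding desig_def by auto
        have "card (inc E ends q) \<le> 2" using low wp(3)[OF e3(1)] unfolding q_def by blast
        then have "r' \<noteq> q" using r' by auto
        then have rr: "r' = r" using r' r by auto
        have "inc E' ends r = inc E ends r"
        proof
          show "inc E' ends r \<subseteq> inc E ends r" unfolding E'_def by auto
          show "inc E ends r \<subseteq> inc E' ends r"
          proof
            fix e assume e: "e \<in> inc E ends r"
            have "u \<notin> ends e"
            proof
              assume ue: "u \<in> ends e"
              have "r \<noteq> u" using hE r unfolding E'_def by auto
              then show False using high_high[OF wf _ ue _ _ hu] e r' rr by auto
            qed
            then show "e \<in> inc E' ends r" using e unfolding E'_def by auto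
          qed
        qed
        then have "card ?X = 3" using r' rr by simp
        then have "1 \<in> c' ` ?X" using goodD2[OF gd'] by blast
        then show ?thesis by force
      qed
      then obtain e0 where e0': "e0 \<in> ?X" "c' e0 \<in> {1,2}" by blast
      have "\<exists>d\<in>{3,4}. d \<notin> c' ` ?X"
      proof (rule L_free[where X="?X" and c=c'])
        show "finite ?X" by (rule finite_inc[OF finE'])
        show "e0 \<in> ?X" "c' e0 \<in> {1,2}" using e0' by auto
        show "card ?X \<le> 3" using wfD(3)[OF wf'] by blast
        show "card ?X = 3 \<longrightarrow> 1 \<in> c' ` ?X \<and> 2 \<in> c' ` ?X" using goodD2[OF gd'] goodD3[OF gd'] by blast
      qed
      then obtain d where d: "d \<in> {3,4}" "d \<notin> c' ` ?X" by blast
      have "BP d" unfolding BP_def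
      proof (intro ballI)
        fix g z f assume g: "g \<in> inc E' ends q" and z: "z \<in> ends g" and f: "f \<in> inc E' ends z"
        have gh: "g = h" using g ih by simp
        have "z = q \<or> z = r" using z gh r by auto
        then show "c' f \<noteq> d"
        proof
          assume "z = q"
          then have "f = h" using f ih by auto
          moreover have "h \<in> ?X" using hE r by auto
          ultimately show ?thesis using d(2) by auto
        next
          assume "z = r" then show ?thesis using f d(2) by auto
        qed
      qed
      then show ?thesis using d(1) by blast
    qed
    then show ?thesis using that by blast
  qed
  define \<sigma> where "\<sigma> e = (if e = e3 then d else if e = b1 then 1 else (2::nat))" for e
  have sv: "\<sigma> e3 = d" "\<sigma> b1 = 1" "\<sigma> b2 = 2" using bA B(2) unfolding \<sigma>_def by auto
  have Acases: "a = e3 \<or> a = b1 \<or> a = b2" if "a \<in> inc E ends u" for a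
  proof (cases "a = e3")
    case False
    then have "a \<in> inc E ends u - {e3}" using that by simp
    then have "a \<in> {b1, b2}" unfolding B(1) .
    then show ?thesis by auto
  qed simp
  have img: "\<sigma> ` inc E ends u = {d, 1, 2}"
  proof -
    have "inc E ends u = insert e3 (inc E ends u - {e3})" using e3(1) by (rule insert_Diff[symmetric])
    then have "inc E ends u = {e3, b1, b2}" unfolding B(1) .
    then show ?thesis using sv by auto
  qed
  have BPq: "c' g \<noteq> d" if "g \<in> inc E' ends q" for g
  proof -
    have "q \<in> ends g" using that by simp
    then show ?thesis using d(2)[unfolded BP_def, rule_format, OF that _ that] by blast
  qed
  have good: "good E ends D (\<lambda>e. if e \<in> del E ends {u} then c' e else \<sigma> e)"
  proof (rule R1_extend[OF wf hu gd'[unfolded E'_def] uD])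
    show "D - {u} \<subseteq> D'" unfolding D'_def by auto
    show "\<And>a. a \<in> inc E ends u \<Longrightarrow> ends a = {u, w a} \<and> w a \<noteq> u" using wp(1,2) by blast
    show "\<And>a. a \<in> inc E ends u \<Longrightarrow> \<sigma> a \<in> {1,2,3,4}" using Acases sv d(1) by fastforce
    show "\<And>a b. a \<in> inc E ends u \<Longrightarrow> b \<in> inc E ends u \<Longrightarrow> a \<noteq> b \<Longrightarrow> \<sigma> a \<noteq> \<sigma> b"
    proof -
      fix a b assume h: "a \<in> inc E ends u" "b \<in> inc E ends u" "a \<noteq> b"
      show "\<sigma> a \<noteq> \<sigma> b" using Acases[OF h(1)] Acases[OF h(2)] h(3) sv d(1) by auto
    qed
    show "\<And>a g. a \<in> inc E ends u \<Longrightarrow> g \<in> inc (del E ends {u}) ends (w a) \<Longrightarrow> c' g \<noteq> \<sigma> a"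
    proof -
      fix a g assume h: "a \<in> inc E ends u" "g \<in> inc (del E ends {u}) ends (w a)"
      show "c' g \<noteq> \<sigma> a"
      proof (cases "a = e3")
        case True then show ?thesis using BPq h(2) sv unfolding q_def E'_def by auto
      next
        case False then show ?thesis using bempty[OF h(1) False] h(2) unfolding E'_def by auto
      qed
    qed
    show "\<And>a g z f. a \<in> inc E ends u \<Longrightarrow> 3 \<le> \<sigma> a \<Longrightarrow> g \<in> inc (del E ends {u}) ends (w a) \<Longrightarrow>
               z \<in> ends g \<Longrightarrow> f \<in> inc (del E ends {u}) ends z \<Longrightarrow> c' f \<noteq> \<sigma> a"
    proof -
      fix a g z f assume h: "a \<in> inc E ends u" "3 \<le> \<sigma> a" "g \<in> inc (del E ends {u}) ends (w a)"
        "z \<in> ends g" "f \<in> inc (del E ends {u}) ends z"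
      have "a = e3" using Acases[OF h(1)] h(2) sv by auto
      then show "c' f \<noteq> \<sigma> a" using d(2) h(3-5) sv unfolding BP_def q_def E'_def by auto
    qed
    show "\<And>a. a \<in> inc E ends u \<Longrightarrow> w a \<in> D \<Longrightarrow> \<sigma> a \<le> 2"
    proof -
      fix a assume h: "a \<in> inc E ends u" "w a \<in> D"
      then have "a \<noteq> e3" using qD unfolding q_def by auto
      then show "\<sigma> a \<le> 2" using Acases[OF h(1)] sv by auto
    qed
    show "1 \<in> \<sigma> ` inc E ends u" "2 \<in> \<sigma> ` inc E ends u" unfolding img by auto
    show "\<And>a b f. a \<in> inc E ends u \<Longrightarrow> b \<in> inc E ends u \<Longrightarrow> a \<noteq> b \<Longrightarrow> 3 \<le> \<sigma> a \<Longrightarrow>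
               f \<in> inc (del E ends {u}) ends (w b) \<Longrightarrow> c' f \<noteq> \<sigma> a"
    proof -
      fix a b f assume h: "a \<in> inc E ends u" "b \<in> inc E ends u" "a \<noteq> b" "3 \<le> \<sigma> a"
        "f \<in> inc (del E ends {u}) ends (w b)"
      have "a = e3" using Acases[OF h(1)] h(4) sv by auto
      then have "b \<noteq> e3" using h(3) by simp
      then show "c' f \<noteq> \<sigma> a" using bempty[OF h(2)] h(5) unfolding E'_def by auto
    qed
  qed
  then show ?thesis by blast
qed

lemma dhyp_del_same:
  assumes wf: "wf E ends" and dh: "dhyp E ends D"
  shows "dhyp (del E ends S) ends D"
  unfolding dhyp_def
proof (intro conjI ballI allI impI)
  have fin: "finite E" using wfD(1)[OF wf] .
  fix p assume "p \<in> D"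
  then show "card (inc (del E ends S) ends p) \<le> 1"
    using dh card_inc_del_le[OF fin, of ends S p] unfolding dhyp_def by force
next
  have fin: "finite E" using wfD(1)[OF wf] .
  fix v assume v: "card (inc (del E ends S) ends v) = 3"
  have le: "card (inc (del E ends S) ends v) \<le> card (inc E ends v)" by (rule card_inc_del_le[OF fin])
  have v3: "card (inc E ends v) = 3" using le v wfD(3)[OF wf, of v] by linarith
  have "dcnt (del E ends S) ends D v \<le> dcnt E ends D v"
    unfolding dcnt_def by (rule card_mono) (use fin in auto)
  then show "dcnt (del E ends S) ends D v \<le> 2" using dh v3 unfolding dhyp_def by fastforce
qed

lemma closed_ext:
  assumes wf: "wf E ends"
    and cl: "\<forall>e\<in>E. ends e \<inter> S \<noteq> {} \<longrightarrow> ends e \<subseteq> S"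
    and gd': "good (del E ends S) ends D' c'" and DD: "D - S \<subseteq> D'"
    and R: "\<forall>e\<in>E - del E ends S. \<sigma> e \<in> {1,2,3,4}"
    and Q: "\<forall>e\<in>E - del E ends S. \<forall>f\<in>E - del E ends S. e \<noteq> f \<longrightarrow> \<sigma> e = \<sigma> f \<longrightarrow>
              \<sigma> e \<le> 2 \<and> ends e \<inter> ends f = {}"
    and I: "\<forall>v\<in>S. card (inc E ends v) = 3 \<longrightarrow> 1 \<in> \<sigma> ` inc E ends v \<and> 2 \<in> \<sigma> ` inc E ends v"
    and Dn: "\<forall>e\<in>E - del E ends S. ends e \<inter> D \<noteq> {} \<longrightarrow> \<sigma> e \<le> 2"
  shows "good E ends D (\<lambda>e. if e \<in> del E ends S then c' e else \<sigma> e)"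
proof -
  let ?E' = "del E ends S" and ?N = "E - del E ends S"
  define col where "col = (\<lambda>e. if e \<in> ?E' then c' e else \<sigma> e)"
  have fin: "finite E" using wfD(1)[OF wf] .
  have two: "\<forall>e\<in>E. card (ends e) = 2" using wfD(2)[OF wf] by blast
  have cN: "\<And>e. e \<in> ?N \<Longrightarrow> col e = \<sigma> e" unfolding col_def by auto
  have cO: "\<And>e. e \<in> ?E' \<Longrightarrow> col e = c' e" unfolding col_def by auto
  have gdc: "good ?E' ends D' col" using good_cong[of ?E' col c'] gd' cO by blast
  have Nsub: "\<And>e. e \<in> ?N \<Longrightarrow> ends e \<subseteq> S" using cl by auto
  have toN: "\<And>f v. f \<in> E \<Longrightarrow> v \<in> ends f \<Longrightarrow> v \<in> S \<Longrightarrow> f \<in> ?N" by auto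
  have pr: "proper E ends col"
  proof (rule proper_ext[OF two])
    show "proper ?E' ends col" by (rule goodD1[OF gdc])
    show "\<forall>e\<in>?N. col e \<in> {1,2,3,4}" using R cN by auto
    show "\<forall>e\<in>?N. \<forall>f\<in>E. ladj ends e f \<longrightarrow> col e \<noteq> col f"
    proof (intro ballI impI)
      fix e f assume e: "e \<in> ?N" and f: "f \<in> E" and l: "ladj ends e f"
      obtain v where v: "e \<noteq> f" "v \<in> ends e" "v \<in> ends f" using l by (auto elim: ladjE)
      have fN: "f \<in> ?N" using toN[OF f v(3)] Nsub[OF e] v(2) by blast
      show "col e \<noteq> col f"
      proof
        assume "col e = col f"
        then have "\<sigma> e = \<sigma> f" using cN e fN by simp
        then have "ends e \<inter> ends f = {}" using Q e fN v(1) by blast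
        then show False using v by auto
      qed
    qed
    show "\<forall>e\<in>?N. \<forall>f\<in>E. \<forall>g\<in>E. e \<noteq> f \<longrightarrow> col e = col f \<longrightarrow> 3 \<le> col e
              \<longrightarrow> ladj ends e g \<longrightarrow> ladj ends g f \<longrightarrow> False"
    proof (intro ballI impI)
      fix e f g assume e: "e \<in> ?N" and f: "f \<in> E" and g: "g \<in> E" and ef: "e \<noteq> f"
        and cc: "col e = col f" and c3: "3 \<le> col e" and l1: "ladj ends e g" and l2: "ladj ends g f"
      obtain v where v: "v \<in> ends e" "v \<in> ends g" using l1 by (auto elim: ladjE)
      have gN: "g \<in> ?N" using toN[OF g v(2)] Nsub[OF e] v(1) by blast
      obtain v' where v': "v' \<in> ends g" "v' \<in> ends f" using l2 by (auto elim: ladjE)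
      have fN: "f \<in> ?N" using toN[OF f v'(2)] Nsub[OF gN] v'(1) by blast
      have "\<sigma> e = \<sigma> f" using cc cN e fN by simp
      then have "\<sigma> e \<le> 2" using Q e fN ef by blast
      then show False using c3 cN[OF e] by simp
    qed
  qed
  have "good E ends D col"
  proof (rule good_ext[OF fin gdc pr _ _ DD])
    show "\<forall>v. card (inc E ends v) = 3 \<longrightarrow> \<not> inc E ends v \<subseteq> ?E' \<longrightarrow>
               1 \<in> col ` inc E ends v \<and> 2 \<in> col ` inc E ends v"
    proof (intro allI impI)
      fix v assume v3: "card (inc E ends v) = 3" and ns: "\<not> inc E ends v \<subseteq> ?E'"
      then obtain e where e: "e \<in> inc E ends v" "e \<notin> ?E'" by blast
      then have "e \<in> ?N" by auto
      then have vS: "v \<in> S" using Nsub e(1) by auto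
      have "\<And>f. f \<in> inc E ends v \<Longrightarrow> f \<in> ?N" using toN vS by auto
      then have "col ` inc E ends v = \<sigma> ` inc E ends v" using cN by (auto intro: image_cong)
      then show "1 \<in> col ` inc E ends v \<and> 2 \<in> col ` inc E ends v" using I vS v3 by simp
    qed
    show "\<forall>e\<in>?N. ends e \<inter> D \<noteq> {} \<longrightarrow> col e \<le> 2" using Dn cN by simp
  qed
  then show ?thesis unfolding col_def .
qed

lemma notD_deg2:
  assumes dh: "dhyp E ends D" and "card (inc E ends v) \<ge> 2" shows "v \<notin> D"
  using assms unfolding dhyp_def by fastforce

lemma card_inc_pair: "inc E ends v = {a, b} \<Longrightarrow> a \<noteq> b \<Longrightarrow> card (inc E ends v) = 2"
  by simp

lemma red_theta:
  assumes wf: "wf E ends" and dh: "dhyp E ends D"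
    and IH: "\<And>E' D'. card E' < card E \<Longrightarrow> wf E' ends \<Longrightarrow> dhyp E' ends D' \<Longrightarrow> \<exists>col. good E' ends D' col"
    and iu: "inc E ends u = {a1,a2,a3}" and iy: "inc E ends y = {b1,b2,b3}"
    and ea: "ends a1 = {u,t1}" "ends a2 = {u,t2}" "ends a3 = {u,t3}"
    and eb: "ends b1 = {y,t1}" "ends b2 = {y,t2}" "ends b3 = {y,t3}"
    and it: "inc E ends t1 = {a1,b1}" "inc E ends t2 = {a2,b2}" "inc E ends t3 = {a3,b3}"
    and dv: "u \<noteq> y" "t1 \<noteq> t2" "t1 \<noteq> t3" "t2 \<noteq> t3" "u \<noteq> t1" "u \<noteq> t2" "u \<noteq> t3"
       "y \<noteq> t1" "y \<noteq> t2" "y \<noteq> t3"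
  shows "\<exists>col. good E ends D col"
proof -
  have fin: "finite E" using wfD(1)[OF wf] .
  define S where "S = {u, y, t1, t2, t3}"
  define E' where "E' = del E ends S"
  have de: "a1 \<noteq> a2" "a1 \<noteq> a3" "a2 \<noteq> a3" "b1 \<noteq> b2" "b1 \<noteq> b3" "b2 \<noteq> b3"
    "a1 \<noteq> b1" "a1 \<noteq> b2" "a1 \<noteq> b3" "a2 \<noteq> b1" "a2 \<noteq> b2" "a2 \<noteq> b3" "a3 \<noteq> b1" "a3 \<noteq> b2" "a3 \<noteq> b3"
    using ea eb dv by (metis doubleton_eq_iff)+
  have inE: "a1 \<in> E" "a2 \<in> E" "a3 \<in> E" "b1 \<in> E" "b2 \<in> E" "b3 \<in> E"
    using iu iy by (metis inc_iff insertI1 insertI2)+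
  have listed: "e = a1 \<or> e = a2 \<or> e = a3 \<or> e = b1 \<or> e = b2 \<or> e = b3"
    if h: "e \<in> E" "ends e \<inter> S \<noteq> {}" for e
  proof -
    obtain v where v: "v \<in> ends e" "v \<in> S" using h(2) by auto
    then have "e \<in> inc E ends v" using h(1) by simp
    moreover have "v = u \<or> v = y \<or> v = t1 \<or> v = t2 \<or> v = t3" using v(2) unfolding S_def by auto
    ultimately show ?thesis using iu iy it by auto
  qed
  have cl: "\<forall>e\<in>E. ends e \<inter> S \<noteq> {} \<longrightarrow> ends e \<subseteq> S"
  proof (intro ballI impI)
    fix e assume h: "e \<in> E" "ends e \<inter> S \<noteq> {}"
    from listed[OF h] show "ends e \<subseteq> S" unfolding S_def by (elim disjE) (simp_all add: ea eb)
  qed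
  have N: "E - E' = {a1,a2,a3,b1,b2,b3}"
  proof
    show "E - E' \<subseteq> {a1,a2,a3,b1,b2,b3}"
    proof
      fix e assume "e \<in> E - E'"
      then have h: "e \<in> E" "ends e \<inter> S \<noteq> {}" unfolding E'_def by auto
      from listed[OF h] show "e \<in> {a1,a2,a3,b1,b2,b3}" by simp
    qed
    show "{a1,a2,a3,b1,b2,b3} \<subseteq> E - E'" using inE ea eb unfolding E'_def S_def by auto
  qed
  have lt: "card E' < card E"
  proof (rule psubset_card_mono[OF fin])
    have "a1 \<in> E - E'" unfolding N by simp
    moreover have "E' \<subseteq> E" unfolding E'_def by (rule del_sub)
    ultimately show "E' \<subset> E" by blast
  qed
  have wf': "wf E' ends" unfolding E'_def by (rule wf_del[OF wf])
  have dh': "dhyp E' ends D" unfolding E'_def by (rule dhyp_del_same[OF wf dh])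
  obtain c' where gd': "good E' ends D c'" using IH[OF lt wf' dh'] by blast
  define \<sigma> where "\<sigma> e = (if e = a1 then 1 else if e = a2 then 2 else if e = a3 then 3
      else if e = b1 then 2 else if e = b2 then 1 else (4::nat))" for e
  have sv: "\<sigma> a1 = 1" "\<sigma> a2 = 2" "\<sigma> a3 = 3" "\<sigma> b1 = 2" "\<sigma> b2 = 1" "\<sigma> b3 = 4"
    unfolding \<sigma>_def using de by auto
  have notD: "u \<notin> D" "y \<notin> D" "t1 \<notin> D" "t2 \<notin> D" "t3 \<notin> D"
  proof -
    have "card (inc E ends u) = 3" "card (inc E ends y) = 3" using iu iy de by auto
    moreover have "card (inc E ends t1) = 2" "card (inc E ends t2) = 2" "card (inc E ends t3) = 2"
      using it de by auto
    ultimately show "u \<notin> D" "y \<notin> D" "t1 \<notin> D" "t2 \<notin> D" "t3 \<notin> D"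
      using notD_deg2[OF dh] by auto
  qed
  have "good E ends D (\<lambda>e. if e \<in> del E ends S then c' e else \<sigma> e)"
  proof (rule closed_ext[OF wf cl gd'[unfolded E'_def]])
    show "D - S \<subseteq> D" by auto
    show "\<forall>e\<in>E - del E ends S. \<sigma> e \<in> {1,2,3,4}" unfolding \<sigma>_def by auto
    show "\<forall>e\<in>E - del E ends S. \<forall>f\<in>E - del E ends S. e \<noteq> f \<longrightarrow> \<sigma> e = \<sigma> f \<longrightarrow>
              \<sigma> e \<le> 2 \<and> ends e \<inter> ends f = {}"
      unfolding N[unfolded E'_def] using sv ea eb dv by auto
    show "\<forall>v\<in>S. card (inc E ends v) = 3 \<longrightarrow> 1 \<in> \<sigma> ` inc E ends v \<and> 2 \<in> \<sigma> ` inc E ends v"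
    proof (intro ballI impI)
      fix v assume v: "v \<in> S" "card (inc E ends v) = 3"
      have "v = u \<or> v = y"
      proof (rule ccontr)
        assume "\<not> (v = u \<or> v = y)"
        then have "v = t1 \<or> v = t2 \<or> v = t3" using v(1) unfolding S_def by auto
        then have "card (inc E ends v) = 2" using it de by auto
        then show False using v(2) by simp
      qed
      then show "1 \<in> \<sigma> ` inc E ends v \<and> 2 \<in> \<sigma> ` inc E ends v"
        using iu iy sv by (auto simp: image_iff)
    qed
    show "\<forall>e\<in>E - del E ends S. ends e \<inter> D \<noteq> {} \<longrightarrow> \<sigma> e \<le> 2"
      unfolding N[unfolded E'_def] using ea eb notD by auto
  qed
  then show ?thesis by blast
qed

lemma red_double:
  assumes wf: "wf E ends" and dh: "dhyp E ends D"
    and IH: "\<And>E' D'. card E' < card E \<Longrightarrow> wf E' ends \<Longrightarrow> dhyp E' ends D' \<Longrightarrow> \<exists>col. good E' ends D' col"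
    and iu: "inc E ends u = {a1,a2,ax}" and iy: "inc E ends y = {b1,b2,bt}"
    and ea: "ends a1 = {u,t1}" "ends a2 = {u,t2}" "ends ax = {u,x}"
    and eb: "ends b1 = {y,t1}" "ends b2 = {y,t2}" "ends bt = {y,t3}"
    and it: "inc E ends t1 = {a1,b1}" "inc E ends t2 = {a2,b2}" "inc E ends x = {ax}" "inc E ends t3 = {bt}"
    and dv: "u \<noteq> y" "t1 \<noteq> t2" "t1 \<noteq> t3" "t2 \<noteq> t3" "u \<noteq> t1" "u \<noteq> t2" "u \<noteq> t3"
       "y \<noteq> t1" "y \<noteq> t2" "y \<noteq> t3" "x \<noteq> u" "x \<noteq> y" "x \<noteq> t1" "x \<noteq> t2" "x \<noteq> t3"
  shows "\<exists>col. good E ends D col"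
proof -
  have fin: "finite E" using wfD(1)[OF wf] .
  define S where "S = {u, y, t1, t2, t3, x}"
  define E' where "E' = del E ends S"
  have de: "a1 \<noteq> a2" "a1 \<noteq> ax" "a2 \<noteq> ax" "b1 \<noteq> b2" "b1 \<noteq> bt" "b2 \<noteq> bt"
    "a1 \<noteq> b1" "a1 \<noteq> b2" "a1 \<noteq> bt" "a2 \<noteq> b1" "a2 \<noteq> b2" "a2 \<noteq> bt" "ax \<noteq> b1" "ax \<noteq> b2" "ax \<noteq> bt"
    using ea eb dv by (metis doubleton_eq_iff)+
  have inE: "a1 \<in> E" "a2 \<in> E" "ax \<in> E" "b1 \<in> E" "b2 \<in> E" "bt \<in> E"
    using iu iy by (metis inc_iff insertI1 insertI2)+
  have listed: "e = a1 \<or> e = a2 \<or> e = ax \<or> e = b1 \<or> e = b2 \<or> e = bt"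
    if h: "e \<in> E" "ends e \<inter> S \<noteq> {}" for e
  proof -
    obtain v where v: "v \<in> ends e" "v \<in> S" using h(2) by auto
    then have "e \<in> inc E ends v" using h(1) by simp
    moreover have "v = u \<or> v = y \<or> v = t1 \<or> v = t2 \<or> v = t3 \<or> v = x" using v(2) unfolding S_def by auto
    ultimately show ?thesis using iu iy it by auto
  qed
  have cl: "\<forall>e\<in>E. ends e \<inter> S \<noteq> {} \<longrightarrow> ends e \<subseteq> S"
  proof (intro ballI impI)
    fix e assume h: "e \<in> E" "ends e \<inter> S \<noteq> {}"
    from listed[OF h] show "ends e \<subseteq> S" unfolding S_def by (elim disjE) (simp_all add: ea eb)
  qed
  have N: "E - E' = {a1,a2,ax,b1,b2,bt}"
  proof
    show "E - E' \<subseteq> {a1,a2,ax,b1,b2,bt}"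
    proof
      fix e assume "e \<in> E - E'"
      then have h: "e \<in> E" "ends e \<inter> S \<noteq> {}" unfolding E'_def by auto
      from listed[OF h] show "e \<in> {a1,a2,ax,b1,b2,bt}" by simp
    qed
    show "{a1,a2,ax,b1,b2,bt} \<subseteq> E - E'" using inE ea eb unfolding E'_def S_def by auto
  qed
  have lt: "card E' < card E"
  proof (rule psubset_card_mono[OF fin])
    have "a1 \<in> E - E'" unfolding N by simp
    moreover have "E' \<subseteq> E" unfolding E'_def by (rule del_sub)
    ultimately show "E' \<subset> E" by blast
  qed
  have wf': "wf E' ends" unfolding E'_def by (rule wf_del[OF wf])
  have dh': "dhyp E' ends D" unfolding E'_def by (rule dhyp_del_same[OF wf dh])
  obtain c' where gd': "good E' ends D c'" using IH[OF lt wf' dh'] by blast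
  define \<sigma> where "\<sigma> e = (if e = bt then 1 else if e = b1 then 2 else if e = b2 then 3
      else if e = a1 then 4 else if e = a2 then 1 else (2::nat))" for e
  have sv: "\<sigma> bt = 1" "\<sigma> b1 = 2" "\<sigma> b2 = 3" "\<sigma> a1 = 4" "\<sigma> a2 = 1" "\<sigma> ax = 2"
    unfolding \<sigma>_def using de by auto
  have notD: "u \<notin> D" "y \<notin> D" "t1 \<notin> D" "t2 \<notin> D"
  proof -
    have "card (inc E ends u) = 3" "card (inc E ends y) = 3" using iu iy de by auto
    moreover have "card (inc E ends t1) = 2" "card (inc E ends t2) = 2"
      using it de by auto
    ultimately show "u \<notin> D" "y \<notin> D" "t1 \<notin> D" "t2 \<notin> D"
      using notD_deg2[OF dh] by auto
  qed
  have "good E ends D (\<lambda>e. if e \<in> del E ends S then c' e else \<sigma> e)"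
  proof (rule closed_ext[OF wf cl gd'[unfolded E'_def]])
    show "D - S \<subseteq> D" by auto
    show "\<forall>e\<in>E - del E ends S. \<sigma> e \<in> {1,2,3,4}" unfolding \<sigma>_def by auto
    show "\<forall>e\<in>E - del E ends S. \<forall>f\<in>E - del E ends S. e \<noteq> f \<longrightarrow> \<sigma> e = \<sigma> f \<longrightarrow>
              \<sigma> e \<le> 2 \<and> ends e \<inter> ends f = {}"
      unfolding N[unfolded E'_def] using sv ea eb dv by auto
    show "\<forall>v\<in>S. card (inc E ends v) = 3 \<longrightarrow> 1 \<in> \<sigma> ` inc E ends v \<and> 2 \<in> \<sigma> ` inc E ends v"
    proof (intro ballI impI)
      fix v assume v: "v \<in> S" "card (inc E ends v) = 3"
      have "v = u \<or> v = y"
      proof (rule ccontr)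
        assume "\<not> (v = u \<or> v = y)"
        then have "v = t1 \<or> v = t2 \<or> v = t3 \<or> v = x" using v(1) unfolding S_def by auto
        then have "card (inc E ends v) \<le> 2" using it de by auto
        then show False using v(2) by simp
      qed
      then show "1 \<in> \<sigma> ` inc E ends v \<and> 2 \<in> \<sigma> ` inc E ends v"
        using iu iy sv by (auto simp: image_iff)
    qed
    show "\<forall>e\<in>E - del E ends S. ends e \<inter> D \<noteq> {} \<longrightarrow> \<sigma> e \<le> 2"
      unfolding N[unfolded E'_def] using ea eb notD sv by auto
  qed
  then show ?thesis by blast
qed

lemma nbr_edge:
  assumes wf: "wf E ends" and t: "t \<in> nbr E ends u"
  obtains a where "a \<in> inc E ends u" "ends a = {u, t}"
proof -
  obtain e where e: "e \<in> E" "u \<in> ends e" "t \<in> ends e" "t \<noteq> u" using t unfolding nbr_iff by auto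
  obtain z where z: "ends e = {u, z}" "z \<noteq> u" using other_end[OF wf e(1,2)] by blast
  have "z = t" using z e(3,4) by auto
  then show ?thesis using that[of e] e z by auto
qed

lemma unsafe_struct:
  assumes wf: "wf E ends" and dh: "dhyp E ends D"
    and hu: "card (inc E ends u) = 3" and dcu: "dcnt E ends D u \<le> 1"
    and mx: "\<forall>v. card (inc E ends v) = 3 \<longrightarrow> dcnt E ends D v \<le> dcnt E ends D u"
    and hy: "card (inc E ends y) = 3" and yu: "y \<noteq> u"
    and big: "\<not> card {e\<in>inc E ends y. ends e \<inter> (D \<union> nbr E ends u) \<noteq> {}} \<le> 2"
    and IH: "\<And>E' D'. card E' < card E \<Longrightarrow> wf E' ends \<Longrightarrow> dhyp E' ends D' \<Longrightarrow> \<exists>col. good E' ends D' col"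
  shows "\<exists>col. good E ends D col"
proof -
  have fin: "finite E" using wfD(1)[OF wf] .
  let ?P = "\<lambda>e. ends e \<inter> (D \<union> nbr E ends u) \<noteq> {}"
  have allP: "{e\<in>inc E ends y. ?P e} = inc E ends y"
  proof (rule card_subset_eq[OF finite_inc[OF fin]])
    show "{e\<in>inc E ends y. ?P e} \<subseteq> inc E ends y" by auto
    have "card {e\<in>inc E ends y. ?P e} \<le> card (inc E ends y)"
      by (rule card_mono[OF finite_inc[OF fin]]) auto
    then show "card {e\<in>inc E ends y. ?P e} = card (inc E ends y)" using big hy by linarith
  qed
  have Py: "?P e" if "e \<in> inc E ends y" for e using allP that by blast
  have yD: "y \<notin> D" using notD_deg2[OF dh] hy by simp
  have uD: "u \<notin> D" using notD_deg2[OF dh] hu by simp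
  have yN: "y \<notin> nbr E ends u"
  proof
    assume "y \<in> nbr E ends u"
    then obtain e where "e \<in> E" "u \<in> ends e" "y \<in> ends e" "y \<noteq> u" unfolding nbr_iff by auto
    then show False using high_high[OF wf _ _ _ _ hu hy] by blast
  qed
  define t where "t = wv ends y"
  have tp: "ends e = {y, t e}" "t e \<noteq> y" "t e \<in> D \<union> nbr E ends u" "e \<in> inc E ends (t e)"
    if e: "e \<in> inc E ends y" for e
  proof -
    show te: "ends e = {y, t e}" "t e \<noteq> y" using wv_prop[OF wf e] unfolding t_def by auto
    show "t e \<in> D \<union> nbr E ends u" using Py[OF e] te yD yN by auto
    show "e \<in> inc E ends (t e)" using e te by auto
  qed
  have low: "card (inc E ends x) \<le> 2" if "x \<in> nbr E ends u" for x using low_nbr[OF wf hu that] .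
  have nu: "u \<notin> ends e" if "e \<in> inc E ends y" "t e \<in> nbr E ends u" for e
  proof
    assume "u \<in> ends e"
    then have "u = t e" using tp(1)[OF that(1)] yu by auto
    then show False using that(2) unfolding nbr_iff by auto
  qed
  have tdist: "t e \<noteq> t e'" if h: "e \<in> inc E ends y" "e' \<in> inc E ends y" "e \<noteq> e'"
    "t e \<in> nbr E ends u" for e e'
  proof
    assume eq: "t e = t e'"
    obtain a where a: "a \<in> inc E ends u" "ends a = {u, t e}" using nbr_edge[OF wf h(4)] by blast
    have "a \<noteq> e" using a nu[OF h(1,4)] by auto
    moreover have "a \<noteq> e'" using a nu[OF h(2)] h(4) eq by auto
    moreover have sub: "{a, e, e'} \<subseteq> inc E ends (t e)" using a tp(4)[OF h(1)] tp(4)[OF h(2)] eq by auto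
    ultimately have c3: "card {a,e,e'} = 3" using h(3) by auto
    have "card {a, e, e'} \<le> card (inc E ends (t e))" by (rule card_mono[OF finite_inc[OF fin] sub])
    then show False using low[OF h(4)] c3 by linarith
  qed
  have tinc: "inc E ends (t e) = {a, e}"
    if h: "e \<in> inc E ends y" "t e \<in> nbr E ends u" "a \<in> inc E ends u" "ends a = {u, t e}" for e a
  proof (rule card_le2_two[OF low[OF h(2)] finite_inc[OF fin]])
    show "a \<in> inc E ends (t e)" using h(3,4) by auto
    show "e \<in> inc E ends (t e)" by (rule tp(4)[OF h(1)])
    show "a \<noteq> e" using h(4) nu[OF h(1,2)] by auto
  qed
  show ?thesis
  proof (cases "\<exists>e3\<in>inc E ends y. t e3 \<in> D")
    case False
    then have tN: "t e \<in> nbr E ends u" if "e \<in> inc E ends y" for e using tp(3)[OF that] that by auto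
    obtain e1 e2 e3 where Y: "inc E ends y = {e1,e2,e3}" "e1 \<noteq> e2" "e2 \<noteq> e3" "e1 \<noteq> e3"
      using hy card_3_iff by metis
    have eY: "e1 \<in> inc E ends y" "e2 \<in> inc E ends y" "e3 \<in> inc E ends y" using Y by auto
    obtain a1 where a1: "a1 \<in> inc E ends u" "ends a1 = {u, t e1}" using nbr_edge[OF wf tN[OF eY(1)]] by blast
    obtain a2 where a2: "a2 \<in> inc E ends u" "ends a2 = {u, t e2}" using nbr_edge[OF wf tN[OF eY(2)]] by blast
    obtain a3 where a3: "a3 \<in> inc E ends u" "ends a3 = {u, t e3}" using nbr_edge[OF wf tN[OF eY(3)]] by blast
    have td: "t e1 \<noteq> t e2" "t e1 \<noteq> t e3" "t e2 \<noteq> t e3"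
      using tdist eY tN Y by auto
    have ad: "a1 \<noteq> a2" "a1 \<noteq> a3" "a2 \<noteq> a3" using a1 a2 a3 td by (metis doubleton_eq_iff)+
    have U: "inc E ends u = {a1,a2,a3}"
    proof (rule card_subset_eq[OF finite_inc[OF fin], symmetric])
      show "{a1,a2,a3} \<subseteq> inc E ends u" using a1 a2 a3 by auto
      show "card {a1,a2,a3} = card (inc E ends u)" using ad hu by simp
    qed
    have tu: "u \<noteq> t e1" "u \<noteq> t e2" "u \<noteq> t e3" using tN eY unfolding nbr_iff by auto
    show ?thesis
    proof (rule red_theta[OF wf dh IH U Y(1) a1(2) a2(2) a3(2) tp(1)[OF eY(1)] tp(1)[OF eY(2)] tp(1)[OF eY(3)]
          tinc[OF eY(1) tN[OF eY(1)] a1] tinc[OF eY(2) tN[OF eY(2)] a2] tinc[OF eY(3) tN[OF eY(3)] a3]])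
      show "u \<noteq> y" using yu by simp
    qed (use td tu tp(2)[OF eY(1)] tp(2)[OF eY(2)] tp(2)[OF eY(3)] in auto)
  next
    case True
    then obtain e3 where e3: "e3 \<in> inc E ends y" "t e3 \<in> D" by blast
    have e3D: "e3 \<in> {e\<in>inc E ends y. ends e \<inter> D \<noteq> {}}" using e3 tp(1)[OF e3(1)] by auto
    have dy1: "dcnt E ends D y \<ge> 1"
      unfolding dcnt_def using e3D card_0_eq[OF finite_subset[OF _ finite_inc[OF fin]]]
      by (metis (no_types, lifting) empty_iff le_less_linear less_one mem_Collect_eq subsetI)
    have du: "dcnt E ends D u = 1" using mx hy dy1 dcu by fastforce
    have dy: "dcnt E ends D y \<le> 1" using mx hy du by fastforce
    have Ty: "{e\<in>inc E ends y. ends e \<inter> D \<noteq> {}} = {e3}"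
    proof -
      have fT: "finite {e\<in>inc E ends y. ends e \<inter> D \<noteq> {}}" using fin by simp
      have "card {e\<in>inc E ends y. ends e \<inter> D \<noteq> {}} \<le> 1" using dy unfolding dcnt_def .
      then show ?thesis
      proof (rule card_le1_cases[OF _ fT])
        assume "{e\<in>inc E ends y. ends e \<inter> D \<noteq> {}} = {}" then show ?thesis using e3D by blast
      next
        fix g assume "{e\<in>inc E ends y. ends e \<inter> D \<noteq> {}} = {g}"
        then show ?thesis using e3D by auto
      qed
    qed
    have tN: "t e \<in> nbr E ends u" "t e \<notin> D" if "e \<in> inc E ends y" "e \<noteq> e3" for e
    proof -
      have "e \<notin> {e\<in>inc E ends y. ends e \<inter> D \<noteq> {}}" using Ty that(2) by auto
      then have "ends e \<inter> D = {}" using that(1) by auto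
      then show "t e \<notin> D" using tp(1)[OF that(1)] by auto
      then show "t e \<in> nbr E ends u" using tp(3)[OF that(1)] by auto
    qed
    obtain e1 e2 where Y2: "inc E ends y - {e3} = {e1, e2}" "e1 \<noteq> e2"
    proof -
      have "card (inc E ends y - {e3}) = 2" using hy e3(1) finite_inc[OF fin] by simp
      then obtain p q where "inc E ends y - {e3} = {p, q}" "p \<noteq> q" unfolding card_2_iff by blast
      then show ?thesis by (rule that)
    qed
    have eY0: "e1 \<in> inc E ends y - {e3}" "e2 \<in> inc E ends y - {e3}" unfolding Y2(1) by simp_all
    have eY: "e1 \<in> inc E ends y" "e2 \<in> inc E ends y" "e1 \<noteq> e3" "e2 \<noteq> e3" using eY0 by auto
    have Y: "inc E ends y = {e1, e2, e3}"
    proof -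
      have "inc E ends y = insert e3 (inc E ends y - {e3})" using e3(1) by (rule insert_Diff[symmetric])
      then show ?thesis unfolding Y2(1) by auto
    qed
    obtain a1 where a1: "a1 \<in> inc E ends u" "ends a1 = {u, t e1}" using nbr_edge[OF wf tN(1)[OF eY(1,3)]] by blast
    obtain a2 where a2: "a2 \<in> inc E ends u" "ends a2 = {u, t e2}" using nbr_edge[OF wf tN(1)[OF eY(2,4)]] by blast
    have Tu: "card {e\<in>inc E ends u. ends e \<inter> D \<noteq> {}} = 1" using du unfolding dcnt_def .
    then obtain ax where ax: "{e\<in>inc E ends u. ends e \<inter> D \<noteq> {}} = {ax}" by (rule card_1_singletonE)
    have axu: "ax \<in> inc E ends u" "ends ax \<inter> D \<noteq> {}" using ax by auto
    define x where "x = wv ends u ax"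
    have xp: "ends ax = {u, x}" "x \<noteq> u" using wv_prop[OF wf axu(1)] unfolding x_def by auto
    have xD: "x \<in> D" using axu(2) xp uD by auto
    have td: "t e1 \<noteq> t e2" "t e1 \<noteq> t e3" "t e2 \<noteq> t e3"
      using tdist[OF eY(1) eY(2) Y2(2) tN(1)[OF eY(1,3)]] tN(2)[OF eY(1,3)] tN(2)[OF eY(2,4)] e3(2) by auto
    have xt: "x \<noteq> t e1" "x \<noteq> t e2" using xD tN(2)[OF eY(1,3)] tN(2)[OF eY(2,4)] by auto
    have ad: "a1 \<noteq> a2" "a1 \<noteq> ax" "a2 \<noteq> ax" using a1 a2 xp td xt by (metis doubleton_eq_iff)+
    have U: "inc E ends u = {a1,a2,ax}"
    proof (rule card_subset_eq[OF finite_inc[OF fin], symmetric])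
      show "{a1,a2,ax} \<subseteq> inc E ends u" using a1 a2 axu by auto
      show "card {a1,a2,ax} = card (inc E ends u)" using ad hu by simp
    qed
    have ix: "inc E ends x = {ax}"
    proof -
      have c1: "card (inc E ends x) \<le> 1" using dh xD unfolding dhyp_def by auto
      have "ax \<in> inc E ends x" using axu xp by auto
      then show ?thesis using card_le1_cases[OF c1 finite_inc[OF fin]] by (metis singletonD empty_iff)
    qed
    have it3: "inc E ends (t e3) = {e3}"
    proof -
      have c1: "card (inc E ends (t e3)) \<le> 1" using dh e3(2) unfolding dhyp_def by auto
      have "e3 \<in> inc E ends (t e3)" by (rule tp(4)[OF e3(1)])
      then show ?thesis using card_le1_cases[OF c1 finite_inc[OF fin]] by (metis singletonD empty_iff)
    qed
    have tu: "u \<noteq> t e1" "u \<noteq> t e2" "u \<noteq> t e3"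
      using tN(1)[OF eY(1,3)] tN(1)[OF eY(2,4)] e3(2) uD unfolding nbr_iff by auto
    have x3: "x \<noteq> t e3"
    proof
      assume "x = t e3"
      then have "ax \<in> inc E ends (t e3)" using axu xp by auto
      then have "ax = e3" using it3 by auto
      then show False using tp(1)[OF e3(1)] xp tu(3) yu by auto
    qed
    show ?thesis
    proof (rule red_double[OF wf dh IH U Y a1(2) a2(2) xp(1) tp(1)[OF eY(1)] tp(1)[OF eY(2)] tp(1)[OF e3(1)]
          tinc[OF eY(1) tN(1)[OF eY(1,3)] a1] tinc[OF eY(2) tN(1)[OF eY(2,4)] a2] ix it3])
    qed (use td tu tp(2)[OF eY(1)] tp(2)[OF eY(2)] tp(2)[OF e3(1)] xp(2) xt x3 yu xD yD in auto)
  qed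
qed

lemma main_lemma:
  assumes "wf E ends" "dhyp E ends D"
  shows "\<exists>col. good E ends D col"
  using assms
proof (induction "card E" arbitrary: E D rule: less_induct)
  case less
  note wf = less.prems(1) and dh = less.prems(2)
  have IH: "\<And>E' D'. card E' < card E \<Longrightarrow> wf E' ends \<Longrightarrow> dhyp E' ends D' \<Longrightarrow> \<exists>col. good E' ends D' col"
    using less.hyps by blast
  have fin: "finite E" using wfD(1)[OF wf] .
  show ?case
  proof (cases "E = {}")
    case True
    have "good E ends D (\<lambda>_. 1)" unfolding good_def proper_def using True by (simp add: inc_def)
    then show ?thesis by blast
  next
    case nE: False
    show ?thesis
    proof (cases "\<forall>v. card (inc E ends v) \<le> 2")
      case True
      obtain e where e: "e \<in> E" using nE by blast
      have "card (ends e) = 2" using wfD(2)[OF wf e] .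
      then obtain w where "w \<in> ends e" by (metis card_2_iff insertI1)
      then have "e \<in> inc E ends w" using e by simp
      then show ?thesis by (rule red_R2[OF wf dh True _ IH])
    next
      case False
      define H where "H = {v. card (inc E ends v) = 3}"
      have Hne: "H \<noteq> {}"
      proof -
        from False obtain v where v: "\<not> card (inc E ends v) \<le> 2" by blast
        have "card (inc E ends v) \<le> 3" using wfD(3)[OF wf] by blast
        then have "card (inc E ends v) = 3" using v by linarith
        then show ?thesis unfolding H_def by auto
      qed
      have Hsub: "H \<subseteq> \<Union>(ends ` E)"
      proof
        fix v assume "v \<in> H"
        then have "inc E ends v \<noteq> {}" unfolding H_def by auto
        then show "v \<in> \<Union>(ends ` E)" by auto
      qed
      have finH: "finite H"
      proof (rule finite_subset[OF Hsub])
        show "finite (\<Union>(ends ` E))"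
        proof (rule finite_Union)
          show "finite (ends ` E)" using fin by simp
          show "\<And>M. M \<in> ends ` E \<Longrightarrow> finite M"
          proof -
            fix M assume "M \<in> ends ` E"
            then obtain e where "e \<in> E" "M = ends e" by blast
            then have "card M = 2" using wfD(2)[OF wf] by simp
            then show "finite M" by (intro card_ge_0_finite) simp
          qed
        qed
      qed
      let ?M = "Max (dcnt E ends D ` H)"
      have "?M \<in> dcnt E ends D ` H" using finH Hne by simp
      then obtain u where u: "u \<in> H" "dcnt E ends D u = ?M" by auto
      have mx: "\<forall>v. card (inc E ends v) = 3 \<longrightarrow> dcnt E ends D v \<le> dcnt E ends D u"
        using u finH unfolding H_def by auto
      have hu: "card (inc E ends u) = 3" using u unfolding H_def by simp
      have du2: "dcnt E ends D u \<le> 2" using dh hu unfolding dhyp_def by auto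
      show ?thesis
      proof (cases "dcnt E ends D u = 2")
        case True then show ?thesis by (rule red_C1[OF wf dh hu _ IH])
      next
        case False
        then have du1: "dcnt E ends D u \<le> 1" using du2 by simp
        show ?thesis
        proof (cases "\<forall>v. card (inc E ends v) = 3 \<longrightarrow> v \<noteq> u \<longrightarrow>
            card {e\<in>inc E ends v. ends e \<inter> (D \<union> nbr E ends u) \<noteq> {}} \<le> 2")
          case True then show ?thesis by (rule red_R1[OF wf dh hu _ IH])
        next
          case False
          then obtain y where y: "card (inc E ends y) = 3" "y \<noteq> u"
            "\<not> card {e\<in>inc E ends y. ends e \<inter> (D \<union> nbr E ends u) \<noteq> {}} \<le> 2" by blast
          show ?thesis by (rule unsafe_struct[OF wf dh hu du1 mx y IH])
        qed
      qed
    qed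
  qed
qed

lemma degree_inc: "loopless E ends \<Longrightarrow> degree E ends v = card (inc E ends v)"
proof -
  assume ll: "loopless E ends"
  have "degree E ends v = (\<Sum>e\<in>inc E ends v. 1)"
    unfolding degree_def inc_def
    by (rule sum.cong) (use ll in \<open>auto simp: loopless_def\<close>)
  then show ?thesis by simp
qed

theorem theorem1:
  fixes V :: "'v set" and E :: "'e set" and ends :: "'e \<Rightarrow> 'v set"
  assumes "multigraph V E ends"
    and "loopless E ends"
    and "irregular3 V E ends"
    and "subcubic V E ends"
  shows "\<exists>E1 E2 E3 E4. packing_1122 E ends E1 E2 E3 E4"
proof -
  note mg = assms(1) and ll = assms(2) and ir = assms(3) and sc = assms(4)
  have finE: "finite E" using mg unfolding multigraph_def by auto
  have sub: "\<And>e. e \<in> E \<Longrightarrow> ends e \<subseteq> V" using mg unfolding multigraph_def by auto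
  have two: "\<And>e. e \<in> E \<Longrightarrow> card (ends e) = 2" using ll unfolding loopless_def by auto
  have deg: "\<And>v. degree E ends v = card (inc E ends v)" using degree_inc[OF ll] .
  have le3: "card (inc E ends v) \<le> 3" for v
  proof (cases "v \<in> V")
    case True then show ?thesis using sc deg unfolding subcubic_def by metis
  next
    case False
    then have "inc E ends v = {}" unfolding inc_def using sub by blast
    then show ?thesis by simp
  qed
  have irr: "\<exists>x\<in>ends e. card (inc E ends x) \<le> 2" if e: "e \<in> E" for e
  proof -
    obtain x y where xy: "ends e = {x, y}" "x \<noteq> y" using two[OF e] card_2_iff by metis
    have "x \<in> V" "y \<in> V" using sub[OF e] xy by auto
    moreover have "adjacent E ends x y" unfolding adjacent_def using xy e by blast
    ultimately have "\<not> (degree E ends x = 3 \<and> degree E ends y = 3)" using ir unfolding irregular3_def by blast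
    then have "card (inc E ends x) \<noteq> 3 \<or> card (inc E ends y) \<noteq> 3" using deg by simp
    then show ?thesis using le3[of x] le3[of y] xy by force
  qed
  have wf: "wf E ends" unfolding wf_def using finE two le3 irr by blast
  have dh: "dhyp E ends {}" unfolding dhyp_def dcnt_def by simp
  obtain col where gd: "good E ends {} col" using main_lemma[OF wf dh] by blast
  have pr: "proper E ends col" by (rule goodD1[OF gd])
  define Ei where "Ei i = {e\<in>E. col e = i}" for i :: nat
  have "packing_1122 E ends (Ei 1) (Ei 2) (Ei 3) (Ei 4)"
    unfolding packing_1122_def
  proof (intro conjI ballI impI)
    show "Ei 1 \<union> Ei 2 \<union> Ei 3 \<union> Ei 4 = E" using properD1[OF pr] unfolding Ei_def by auto
  next
    fix e f assume h: "e \<in> Ei 1" "f \<in> Ei 1" "e \<noteq> f"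
    then have ef: "e \<in> E" "f \<in> E" "col e = col f" unfolding Ei_def by auto
    show "dist_ge2 E ends e f" unfolding dist_ge2_def
    proof
      assume "ladj ends e f" then show False using properD2[OF pr ef(1,2)] ef(3) by blast
    qed
  next
    fix e f assume h: "e \<in> Ei 2" "f \<in> Ei 2" "e \<noteq> f"
    then have ef: "e \<in> E" "f \<in> E" "col e = col f" unfolding Ei_def by auto
    show "dist_ge2 E ends e f" unfolding dist_ge2_def
    proof
      assume "ladj ends e f" then show False using properD2[OF pr ef(1,2)] ef(3) by blast
    qed
  next
    fix e f assume h: "e \<in> Ei 3" "f \<in> Ei 3" "e \<noteq> f"
    then have ef: "e \<in> E" "f \<in> E" "col e = col f" "3 \<le> col e" unfolding Ei_def by auto
    show "dist_ge3 E ends e f" unfolding dist_ge3_def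
    proof (intro conjI notI)
      assume "ladj ends e f" then show False using properD2[OF pr ef(1,2)] ef(3) by blast
    next
      assume "\<exists>g\<in>E. ladj ends e g \<and> ladj ends g f"
      then obtain g where "g \<in> E" "ladj ends e g" "ladj ends g f" by blast
      then show False using properD3[OF pr ef(1,2) _ h(3) ef(3,4)] by blast
    qed
  next
    fix e f assume h: "e \<in> Ei 4" "f \<in> Ei 4" "e \<noteq> f"
    then have ef: "e \<in> E" "f \<in> E" "col e = col f" "3 \<le> col e" unfolding Ei_def by auto
    show "dist_ge3 E ends e f" unfolding dist_ge3_def
    proof (intro conjI notI)
      assume "ladj ends e f" then show False using properD2[OF pr ef(1,2)] ef(3) by blast
    next
      assume "\<exists>g\<in>E. ladj ends e g \<and> ladj ends g f"
      then obtain g where "g \<in> E" "ladj ends e g" "ladj ends g f" by blast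
      then show False using properD3[OF pr ef(1,2) _ h(3) ef(3,4)] by blast
    qed
  qed (auto simp: Ei_def)
  then show ?thesis by blast
qed

end
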